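(* Let $L>0$, $\Omega=(0,L)$, $m\ge1$, $d_1,\dots,d_m>0$, and consider $$\partial_tu_i-d_i\partial_{xx}u_i=f_i(x,t,u)\ \text{in }\Omega\times(0,T),\qquad\partial_xu_i(0,t)=\partial_xu_i(L,t)=0,\qquad u_i(x,0)=u_{i,0}(x).$$ Assume (A4): there exist a lower triangular $A=(a_{ij})\in\mathbb{R}^{m\times m}$ with non-negative entries and positive diagonal entries, $r\ge1$ and $C>0$ with $\sum_{j=1}^ia_{ij}f_j(x,t,u)\le C(1+\sum_{j=1}^mu_j)^r$ for all $i$, $u\in\mathbb{R}_+^m$, $(x,t)\in\Omega\times\mathbb{R}_+$. Then for every integer $p\ge2$ there exist $\theta=(\theta_1,\dots,\theta_m)\in(0,\infty)^m$, a constant $\alpha_p>0$ (depending on $\theta$ and $p$) and a constant $C>0$ such that, along every non-negative classical solution $u$, $$\frac{d}{dt}\mathscr{E}_p[u]+\alpha_p\sum_{i=1}^m\int_\Omega|\partial_x(u_i^{p/2})|^2dx\le C\Big(1+\sum_{i=1}^m\int_\Omega u_i^{p-1+r}dx\Big).$$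
   Context: For $p\in\mathbb{N}$, $p\ge2$, and $\theta\in(0,\infty)^m$, $\mathscr{E}_p[u]:=\int_\Omega\sum_{\beta\in\mathbb{Z}_+^m,|\beta|=p}\binom{p}{\beta}\theta^{\beta^2}u(x)^\beta\,dx$, where $|\beta|=\beta_1+\dots+\beta_m$, $\binom{p}{\beta}=\frac{p!}{\beta_1!\cdots\beta_m!}$, $\theta^{\beta^2}=\prod_j\theta_j^{\beta_j^2}$, $u^\beta=\prod_ju_j^{\beta_j}$. A classical solution is one with $u_i\in C([0,T];L^q(\Omega))\cap L^\infty\cap C^{1,2}((\tau,T)\times\overline\Omega)$ for all $q>1$, $0<\tau<T$, solving the system a.e. *)

theory Defs
  imports "HOL-Analysis.Analysis"
begin

text \<open>Components are indexed by 0,...,m-1. A vector in R^m is a function nat => real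
  (only the entries below m matter). Multi-indices beta with |beta| = p are functions
  nat => nat vanishing from m on.\<close>

definition multi_indices :: "nat \<Rightarrow> nat \<Rightarrow> (nat \<Rightarrow> nat) set" where
  "multi_indices m p = {\<beta>. (\<forall>j. m \<le> j \<longrightarrow> \<beta> j = 0) \<and> (\<Sum>j<m. \<beta> j) = p}"

definition multinom :: "nat \<Rightarrow> nat \<Rightarrow> (nat \<Rightarrow> nat) \<Rightarrow> real" where
  "multinom m p \<beta> = real (fact p) / (\<Prod>j<m. real (fact (\<beta> j)))"

definition energy ::
  "nat \<Rightarrow> nat \<Rightarrow> (nat \<Rightarrow> real) \<Rightarrow> real \<Rightarrow> (nat \<Rightarrow> real \<Rightarrow> real \<Rightarrow> real) \<Rightarrow> real \<Rightarrow> real" where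
  "energy m p \<theta> L u t = integral {0..L} (\<lambda>x.
     \<Sum>\<beta>\<in>multi_indices m p. multinom m p \<beta> * (\<Prod>j<m. \<theta> j ^ ((\<beta> j)\<^sup>2)) * (\<Prod>j<m. u j x t ^ \<beta> j))"

definition classical_solution ::
  "real \<Rightarrow> nat \<Rightarrow> (nat \<Rightarrow> real) \<Rightarrow> (nat \<Rightarrow> real \<Rightarrow> real \<Rightarrow> (nat \<Rightarrow> real) \<Rightarrow> real) \<Rightarrow> real
   \<Rightarrow> (nat \<Rightarrow> real \<Rightarrow> real) \<Rightarrow> (nat \<Rightarrow> real \<Rightarrow> real \<Rightarrow> real) \<Rightarrow> bool" where
  "classical_solution L m d f T u0 u \<longleftrightarrow>
     (\<forall>i<m.
        \<comment> \<open>u_i in C([0,T]; L^q(Omega)) for all q > 1\<close>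
        (\<forall>q>1. \<forall>t\<in>{0..T}. set_integrable lborel {0..L} (\<lambda>x. \<bar>u i x t\<bar> powr q)) \<and>
        (\<forall>q>1. \<forall>t0\<in>{0..T}.
           ((\<lambda>t. LINT x:{0..L}|lborel. \<bar>u i x t - u i x t0\<bar> powr q) \<longlongrightarrow> 0) (at t0 within {0..T})) \<and>
        \<comment> \<open>u_i in L^infinity(Omega x (0,T))\<close>
        (\<exists>M. \<forall>x\<in>{0..L}. \<forall>t\<in>{0<..<T}. \<bar>u i x t\<bar> \<le> M) \<and>
        \<comment> \<open>initial datum\<close>
        (AE x in lborel. x \<in> {0..L} \<longrightarrow> u i x 0 = u0 i x)) \<and>
     (\<exists>ut ux uxx. \<forall>i<m.
        \<comment> \<open>C^{1,2}((tau,T) x closure Omega) for all 0 < tau < T\<close>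
        continuous_on ({0..L} \<times> {0<..<T}) (\<lambda>z. u i (fst z) (snd z)) \<and>
        continuous_on ({0..L} \<times> {0<..<T}) (\<lambda>z. ut i (fst z) (snd z)) \<and>
        continuous_on ({0..L} \<times> {0<..<T}) (\<lambda>z. ux i (fst z) (snd z)) \<and>
        continuous_on ({0..L} \<times> {0<..<T}) (\<lambda>z. uxx i (fst z) (snd z)) \<and>
        (\<forall>x\<in>{0..L}. \<forall>t\<in>{0<..<T}.
           ((\<lambda>s. u i x s) has_real_derivative ut i x t) (at t) \<and>
           ((\<lambda>y. u i y t) has_real_derivative ux i x t) (at x within {0..L}) \<and>
           ((\<lambda>y. ux i y t) has_real_derivative uxx i x t) (at x within {0..L})) \<and>
        \<comment> \<open>homogeneous Neumann boundary conditions\<close>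
        (\<forall>t\<in>{0<..<T}. ux i 0 t = 0 \<and> ux i L t = 0) \<and>
        \<comment> \<open>the equation holds a.e. in Omega x (0,T)\<close>
        (AE z in lborel. z \<in> {0<..<L} \<times> {0<..<T} \<longrightarrow>
           ut i (fst z) (snd z) - d i * uxx i (fst z) (snd z)
             = f i (fst z) (snd z) (\<lambda>j. u j (fst z) (snd z))))"

end

theory Submission
  imports Defs
begin

definition mon :: "nat \<Rightarrow> (nat \<Rightarrow> nat) \<Rightarrow> (nat \<Rightarrow> real) \<Rightarrow> real" where
  "mon m \<beta> v = (\<Prod>j<m. v j ^ \<beta> j)"

definition pol :: "nat \<Rightarrow> nat \<Rightarrow> ((nat \<Rightarrow> nat) \<Rightarrow> real) \<Rightarrow> (nat \<Rightarrow> real) \<Rightarrow> real" where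
  "pol m n a v = (\<Sum>\<beta>\<in>multi_indices m n. a \<beta> * mon m \<beta> v)"

definition Dc :: "nat \<Rightarrow> ((nat \<Rightarrow> nat) \<Rightarrow> real) \<Rightarrow> (nat \<Rightarrow> nat) \<Rightarrow> real" where
  "Dc i a = (\<lambda>\<gamma>. real (Suc (\<gamma> i)) * a (\<gamma>(i := Suc (\<gamma> i))))"

lemma finite_MI: "finite (multi_indices m n)"
proof -
  have "multi_indices m n \<subseteq> {f. \<forall>x. (x \<in> {..<m} \<longrightarrow> f x \<in> {..n}) \<and> (x \<notin> {..<m} \<longrightarrow> f x = 0)}"
  proof
    fix \<beta> assume b: "\<beta> \<in> multi_indices m n"
    have "\<beta> x \<le> n" if "x < m" for x
    proof -
      have "\<beta> x \<le> (\<Sum>j<m. \<beta> j)" using that by (intro member_le_sum) auto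
      then show ?thesis using b by (simp add: multi_indices_def)
    qed
    then show "\<beta> \<in> {f. \<forall>x. (x \<in> {..<m} \<longrightarrow> f x \<in> {..n}) \<and> (x \<notin> {..<m} \<longrightarrow> f x = 0)}"
      using b by (auto simp: multi_indices_def)
  qed
  moreover have "finite {f. \<forall>x. (x \<in> {..<m} \<longrightarrow> f x \<in> {..n}) \<and> (x \<notin> {..<m} \<longrightarrow> f x = (0::nat))}"
    by (rule finite_set_of_finite_funs) auto
  ultimately show ?thesis by (rule finite_subset)
qed

lemma sum_upd: fixes \<beta> :: "nat \<Rightarrow> nat" and i m :: nat shows "i < m \<Longrightarrow> (\<Sum>j<m. (\<beta>(i := k)) j) = (\<Sum>j<m. \<beta> j) - \<beta> i + k"
proof -
  assume i: "i < m"
  have a: "(\<Sum>j<m. (\<beta>(i := k)) j) = (\<beta>(i := k)) i + (\<Sum>j\<in>{..<m}-{i}. (\<beta>(i := k)) j)"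
    by (rule sum.remove) (simp_all add: i)
  have b: "(\<Sum>j\<in>{..<m}-{i}. (\<beta>(i := k)) j) = (\<Sum>j\<in>{..<m}-{i}. \<beta> j)"
    by (rule sum.cong) auto
  have c: "(\<Sum>j<m. \<beta> j) = \<beta> i + (\<Sum>j\<in>{..<m}-{i}. \<beta> j)"
    by (rule sum.remove) (simp_all add: i)
  show ?thesis using a b c by simp
qed

lemma reindex_MI:
  assumes i: "i < m"
  shows "(\<Sum>\<beta>\<in>{\<beta>\<in>multi_indices m (Suc n). \<beta> i \<ge> 1}. g \<beta>)
       = (\<Sum>\<gamma>\<in>multi_indices m n. g (\<gamma>(i := Suc (\<gamma> i))))"
proof -
  let ?h = "\<lambda>\<gamma>::nat\<Rightarrow>nat. \<gamma>(i := Suc (\<gamma> i))"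
  have inj: "inj_on ?h (multi_indices m n)"
  proof (rule inj_onI)
    fix x y assume "?h x = ?h y"
    then have "\<And>j. (?h x) j = (?h y) j" by simp
    then have "\<And>j. x j = y j" by (metis Suc_inject fun_upd_apply)
    then show "x = y" by auto
  qed
  have img: "?h ` multi_indices m n = {\<beta>\<in>multi_indices m (Suc n). \<beta> i \<ge> 1}"
  proof
    show "?h ` multi_indices m n \<subseteq> {\<beta>\<in>multi_indices m (Suc n). \<beta> i \<ge> 1}"
    proof
      fix \<beta> assume "\<beta> \<in> ?h ` multi_indices m n"
      then obtain \<gamma> where g: "\<gamma> \<in> multi_indices m n" "\<beta> = ?h \<gamma>" by auto
      have s: "(\<Sum>j<m. \<gamma> j) = n" using g(1) by (simp add: multi_indices_def)
      have le: "\<gamma> i \<le> (\<Sum>j<m. \<gamma> j)" by (rule member_le_sum) (simp_all add: i)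
      have "(\<Sum>j<m. \<beta> j) = Suc n"
        unfolding g(2) sum_upd[OF i, of \<gamma> "Suc (\<gamma> i)"] using s le by simp
      then show "\<beta> \<in> {\<beta>\<in>multi_indices m (Suc n). \<beta> i \<ge> 1}"
        using g i by (auto simp: multi_indices_def)
    qed
  next
    show "{\<beta>\<in>multi_indices m (Suc n). \<beta> i \<ge> 1} \<subseteq> ?h ` multi_indices m n"
    proof
      fix \<beta> assume b: "\<beta> \<in> {\<beta>\<in>multi_indices m (Suc n). \<beta> i \<ge> 1}"
      let ?g = "\<beta>(i := \<beta> i - 1)"
      have s: "(\<Sum>j<m. \<beta> j) = Suc n" using b by (simp add: multi_indices_def)
      have le: "\<beta> i \<le> (\<Sum>j<m. \<beta> j)" by (rule member_le_sum) (simp_all add: i)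
      have b1: "\<beta> i \<ge> 1" using b by simp
      have "(\<Sum>j<m. ?g j) = n"
        unfolding sum_upd[OF i, of \<beta> "\<beta> i - 1"] using s le b1 by simp
      then have "?g \<in> multi_indices m n" using b i by (auto simp: multi_indices_def)
      moreover have "\<beta> = ?h ?g" using b by auto
      ultimately show "\<beta> \<in> ?h ` multi_indices m n" by blast
    qed
  qed
  show ?thesis
    unfolding img[symmetric] sum.reindex[OF inj] o_def by (rule refl)
qed

lemma prod_field_deriv:
  fixes g :: "nat \<Rightarrow> real \<Rightarrow> real"
  assumes "\<And>j. j \<in> I \<Longrightarrow> (g j has_real_derivative g' j) (at s within S)"
  shows "((\<lambda>s. \<Prod>j\<in>I. g j s) has_real_derivative (\<Sum>i\<in>I. g' i * (\<Prod>j\<in>I - {i}. g j s))) (at s within S)"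
proof -
  have "((\<lambda>s. \<Prod>j\<in>I. g j s) has_derivative (\<lambda>y. \<Sum>i\<in>I. (g' i * y) * (\<Prod>j\<in>I - {i}. g j s))) (at s within S)"
    using assms by (intro has_derivative_prod) (auto simp: has_field_derivative_def)
  moreover have "(\<lambda>y. \<Sum>i\<in>I. (g' i * y) * (\<Prod>j\<in>I - {i}. g j s)) = (*) (\<Sum>i\<in>I. g' i * (\<Prod>j\<in>I - {i}. g j s))"
    by (auto simp: sum_distrib_left sum_distrib_right mult_ac)
  ultimately show ?thesis by (simp add: has_field_derivative_def)
qed

lemma mon_upd_minus:
  assumes i: "i < m" and b: "\<beta> i \<ge> 1"
  shows "mon m (\<beta>(i := \<beta> i - 1)) v = v i ^ (\<beta> i - 1) * (\<Prod>j\<in>{..<m} - {i}. v j ^ \<beta> j)"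
proof -
  have a: "(\<Prod>j<m. v j ^ (\<beta>(i := \<beta> i - 1)) j) = v i ^ (\<beta>(i := \<beta> i - 1)) i * (\<Prod>j\<in>{..<m}-{i}. v j ^ (\<beta>(i := \<beta> i - 1)) j)"
    by (rule prod.remove) (simp_all add: i)
  have b: "(\<Prod>j\<in>{..<m}-{i}. v j ^ (\<beta>(i := \<beta> i - 1)) j) = (\<Prod>j\<in>{..<m}-{i}. v j ^ \<beta> j)"
    by (rule prod.cong) auto
  show ?thesis unfolding mon_def using a b by simp
qed

lemma mon_deriv:
  fixes w :: "nat \<Rightarrow> real \<Rightarrow> real"
  assumes "\<And>j. j < m \<Longrightarrow> (w j has_real_derivative w' j) (at s within S)"
  shows "((\<lambda>s. mon m \<beta> (\<lambda>j. w j s)) has_real_derivative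
     (\<Sum>i<m. w' i * (if \<beta> i = 0 then 0 else real (\<beta> i) * mon m (\<beta>(i := \<beta> i - 1)) (\<lambda>j. w j s))))
     (at s within S)"
proof -
  have d: "((\<lambda>s. w j s ^ \<beta> j) has_real_derivative (real (\<beta> j) * w j s ^ (\<beta> j - 1) * w' j)) (at s within S)"
    if "j \<in> {..<m}" for j
    using assms that by (auto intro!: derivative_eq_intros)
  have "((\<lambda>s. mon m \<beta> (\<lambda>j. w j s)) has_real_derivative
     (\<Sum>i<m. (real (\<beta> i) * w i s ^ (\<beta> i - 1) * w' i) * (\<Prod>j\<in>{..<m} - {i}. w j s ^ \<beta> j))) (at s within S)"
    unfolding mon_def by (rule prod_field_deriv[OF d])
  moreover have "(\<Sum>i<m. (real (\<beta> i) * w i s ^ (\<beta> i - 1) * w' i) * (\<Prod>j\<in>{..<m} - {i}. w j s ^ \<beta> j))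
    = (\<Sum>i<m. w' i * (if \<beta> i = 0 then 0 else real (\<beta> i) * mon m (\<beta>(i := \<beta> i - 1)) (\<lambda>j. w j s)))"
  proof (rule sum.cong[OF refl])
    fix i assume i: "i \<in> {..<m}"
    show "(real (\<beta> i) * w i s ^ (\<beta> i - 1) * w' i) * (\<Prod>j\<in>{..<m} - {i}. w j s ^ \<beta> j)
      = w' i * (if \<beta> i = 0 then 0 else real (\<beta> i) * mon m (\<beta>(i := \<beta> i - 1)) (\<lambda>j. w j s))"
    proof (cases "\<beta> i = 0")
      case False
      then show ?thesis using mon_upd_minus[of i m \<beta> "\<lambda>j. w j s"] i by simp
    qed simp
  qed
  ultimately show ?thesis by simp
qed

lemma pol_deriv:
  fixes w :: "nat \<Rightarrow> real \<Rightarrow> real"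
  assumes "\<And>j. j < m \<Longrightarrow> (w j has_real_derivative w' j) (at s within S)"
  shows "((\<lambda>s. pol m (Suc n) a (\<lambda>j. w j s)) has_real_derivative
     (\<Sum>i<m. w' i * pol m n (Dc i a) (\<lambda>j. w j s))) (at s within S)"
proof -
  let ?T = "\<lambda>\<beta> i. (if \<beta> i = 0 then 0 else real (\<beta> i) * mon m (\<beta>(i := \<beta> i - 1)) (\<lambda>j. w j s))"
  have "((\<lambda>s. pol m (Suc n) a (\<lambda>j. w j s)) has_real_derivative
     (\<Sum>\<beta>\<in>multi_indices m (Suc n). a \<beta> * (\<Sum>i<m. w' i * ?T \<beta> i))) (at s within S)"
    unfolding pol_def
    by (intro DERIV_sum DERIV_cmult mon_deriv assms)
  moreover have "(\<Sum>\<beta>\<in>multi_indices m (Suc n). a \<beta> * (\<Sum>i<m. w' i * ?T \<beta> i))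
      = (\<Sum>i<m. w' i * pol m n (Dc i a) (\<lambda>j. w j s))"
  proof -
    have "(\<Sum>\<beta>\<in>multi_indices m (Suc n). a \<beta> * (\<Sum>i<m. w' i * ?T \<beta> i))
        = (\<Sum>i<m. w' i * (\<Sum>\<beta>\<in>multi_indices m (Suc n). a \<beta> * ?T \<beta> i))"
    proof -
      have "(\<Sum>\<beta>\<in>multi_indices m (Suc n). a \<beta> * (\<Sum>i<m. w' i * ?T \<beta> i))
         = (\<Sum>\<beta>\<in>multi_indices m (Suc n). \<Sum>i<m. w' i * (a \<beta> * ?T \<beta> i))"
        by (simp add: sum_distrib_left mult_ac)
      also have "\<dots> = (\<Sum>i<m. \<Sum>\<beta>\<in>multi_indices m (Suc n). w' i * (a \<beta> * ?T \<beta> i))"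
        by (rule sum.swap)
      also have "\<dots> = (\<Sum>i<m. w' i * (\<Sum>\<beta>\<in>multi_indices m (Suc n). a \<beta> * ?T \<beta> i))"
        by (simp add: sum_distrib_left)
      finally show ?thesis .
    qed
    also have "\<dots> = (\<Sum>i<m. w' i * pol m n (Dc i a) (\<lambda>j. w j s))"
    proof (rule sum.cong[OF refl])
      fix i assume i: "i \<in> {..<m}"
      have "(\<Sum>\<beta>\<in>multi_indices m (Suc n). a \<beta> * ?T \<beta> i)
          = (\<Sum>\<beta>\<in>{\<beta>\<in>multi_indices m (Suc n). \<beta> i \<ge> 1}. a \<beta> * ?T \<beta> i)"
        by (rule sum.mono_neutral_right) (auto simp: finite_MI)
      also have "\<dots> = (\<Sum>\<gamma>\<in>multi_indices m n. a (\<gamma>(i := Suc (\<gamma> i))) * ?T (\<gamma>(i := Suc (\<gamma> i))) i)"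
        using i by (intro reindex_MI) auto
      also have "\<dots> = pol m n (Dc i a) (\<lambda>j. w j s)"
        unfolding pol_def Dc_def
      proof (rule sum.cong[OF refl])
        fix \<gamma> :: "nat \<Rightarrow> nat"
        have e: "(\<gamma>(i := Suc (\<gamma> i)))(i := Suc (\<gamma> i) - 1) = \<gamma>" by simp
        show "a (\<gamma>(i := Suc (\<gamma> i))) * ?T (\<gamma>(i := Suc (\<gamma> i))) i =
          real (Suc (\<gamma> i)) * a (\<gamma>(i := Suc (\<gamma> i))) * mon m \<gamma> (\<lambda>j. w j s)"
          by (simp only: fun_upd_same e) simp
      qed
      finally show "w' i * (\<Sum>\<beta>\<in>multi_indices m (Suc n). a \<beta> * ?T \<beta> i) = w' i * pol m n (Dc i a) (\<lambda>j. w j s)"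
        by simp
    qed
    finally show ?thesis .
  qed
  ultimately show ?thesis by simp
qed

definition Th :: "nat \<Rightarrow> (nat \<Rightarrow> real) \<Rightarrow> (nat \<Rightarrow> nat) \<Rightarrow> real" where
  "Th m \<theta> \<beta> = (\<Prod>j<m. \<theta> j ^ ((\<beta> j)\<^sup>2))"

lemma prod_upd:
  fixes F :: "nat \<Rightarrow> nat \<Rightarrow> 'a::comm_monoid_mult"
  assumes i: "i < m"
  shows "(\<Prod>j<m. F j ((\<gamma>(i := k)) j)) = F i k * (\<Prod>j\<in>{..<m}-{i}. F j (\<gamma> j))"
proof -
  have a: "(\<Prod>j<m. F j ((\<gamma>(i := k)) j)) = F i ((\<gamma>(i := k)) i) * (\<Prod>j\<in>{..<m}-{i}. F j ((\<gamma>(i := k)) j))"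
    by (rule prod.remove) (simp_all add: i)
  have b: "(\<Prod>j\<in>{..<m}-{i}. F j ((\<gamma>(i := k)) j)) = (\<Prod>j\<in>{..<m}-{i}. F j (\<gamma> j))"
    by (rule prod.cong) auto
  show ?thesis using a b by simp
qed

lemma prod_rem:
  fixes F :: "nat \<Rightarrow> nat \<Rightarrow> 'a::comm_monoid_mult"
  assumes i: "i < m"
  shows "(\<Prod>j<m. F j (\<gamma> j)) = F i (\<gamma> i) * (\<Prod>j\<in>{..<m}-{i}. F j (\<gamma> j))"
  by (rule prod.remove) (simp_all add: i)

lemma Th_upd:
  assumes i: "i < m"
  shows "Th m \<theta> (\<gamma>(i := Suc (\<gamma> i))) = Th m \<theta> \<gamma> * \<theta> i ^ (2 * \<gamma> i + 1)"
proof -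
  have "Th m \<theta> (\<gamma>(i := Suc (\<gamma> i))) = \<theta> i ^ ((Suc (\<gamma> i))\<^sup>2) * (\<Prod>j\<in>{..<m}-{i}. \<theta> j ^ ((\<gamma> j)\<^sup>2))"
    unfolding Th_def by (rule prod_upd[OF i, where F = "\<lambda>j k. \<theta> j ^ (k\<^sup>2)"])
  moreover have "Th m \<theta> \<gamma> = \<theta> i ^ ((\<gamma> i)\<^sup>2) * (\<Prod>j\<in>{..<m}-{i}. \<theta> j ^ ((\<gamma> j)\<^sup>2))"
    unfolding Th_def by (rule prod_rem[OF i, where F = "\<lambda>j k. \<theta> j ^ (k\<^sup>2)"])
  moreover have "(Suc (\<gamma> i))\<^sup>2 = (\<gamma> i)\<^sup>2 + (2 * \<gamma> i + 1)" by (simp add: power2_eq_square)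
  ultimately show ?thesis by (simp add: power_add mult_ac)
qed

lemma multinom_upd:
  assumes i: "i < m"
  shows "real (Suc (\<gamma> i)) * multinom m (Suc n) (\<gamma>(i := Suc (\<gamma> i))) = real (Suc n) * multinom m n \<gamma>"
proof -
  let ?R = "(\<Prod>j\<in>{..<m}-{i}. real (fact (\<gamma> j)))"
  have a: "(\<Prod>j<m. real (fact ((\<gamma>(i := Suc (\<gamma> i))) j))) = real (fact (Suc (\<gamma> i))) * ?R"
    by (rule prod_upd[OF i, where F = "\<lambda>j k. real (fact k)"])
  have b: "(\<Prod>j<m. real (fact (\<gamma> j))) = real (fact (\<gamma> i)) * ?R"
    by (rule prod_rem[OF i, where F = "\<lambda>j k. real (fact k)"])
  have R: "?R > 0" by (intro prod_pos) auto
  have f: "real (fact (\<gamma> i)) > 0" by simp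
  define X where "X = real (fact (\<gamma> i)) * ?R"
  have X: "X > 0" unfolding X_def using R f by simp
  have a': "(\<Prod>j<m. real (fact ((\<gamma>(i := Suc (\<gamma> i))) j))) = real (Suc (\<gamma> i)) * X"
    unfolding a X_def by (simp add: algebra_simps)
  have b': "(\<Prod>j<m. real (fact (\<gamma> j))) = X" unfolding b X_def ..
  have fn: "real (fact (Suc n)) = real (Suc n) * real (fact n)" by (simp add: algebra_simps)
  have s: "real (Suc (\<gamma> i)) > 0" by simp
  have gen: "k * (F / (k * X)) = (F / X)" if "k > 0" for k F :: real
    using that X by simp
  show ?thesis unfolding multinom_def a' b'
    using gen[OF s, of "real (fact (Suc n))"] unfolding fn by simp
qed

lemma Dc_coef:
  assumes i: "i < m"
  shows "Dc i (\<lambda>\<beta>. multinom m (Suc n) \<beta> * Th m \<theta> \<beta> * E \<beta>) \<gamma>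
       = real (Suc n) * multinom m n \<gamma> * Th m \<theta> \<gamma> * \<theta> i ^ (2 * \<gamma> i + 1) * E (\<gamma>(i := Suc (\<gamma> i)))"
proof -
  have "Dc i (\<lambda>\<beta>. multinom m (Suc n) \<beta> * Th m \<theta> \<beta> * E \<beta>) \<gamma>
      = (real (Suc (\<gamma> i)) * multinom m (Suc n) (\<gamma>(i := Suc (\<gamma> i)))) * Th m \<theta> (\<gamma>(i := Suc (\<gamma> i))) * E (\<gamma>(i := Suc (\<gamma> i)))"
    by (simp add: Dc_def mult_ac)
  also have "\<dots> = real (Suc n) * multinom m n \<gamma> * (Th m \<theta> \<gamma> * \<theta> i ^ (2 * \<gamma> i + 1)) * E (\<gamma>(i := Suc (\<gamma> i)))"
    unfolding multinom_upd[OF i] Th_upd[OF i] ..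
  finally show ?thesis by (simp add: mult_ac)
qed

lemma Dc_cmult: "Dc i (\<lambda>\<beta>. c * a \<beta>) = (\<lambda>\<gamma>. c * Dc i a \<gamma>)"
  by (auto simp: Dc_def)

lemma multinom_pos: "multinom m n \<beta> > 0"
  unfolding multinom_def by (intro divide_pos_pos prod_pos) auto

lemma Th_ge1: "(\<forall>j<m. \<theta> j \<ge> 1) \<Longrightarrow> Th m \<theta> \<beta> \<ge> 1"
  unfolding Th_def by (intro prod_ge_1) auto

lemma Th_pos: "(\<forall>j<m. \<theta> j > 0) \<Longrightarrow> Th m \<theta> \<beta> > 0"
  unfolding Th_def by (intro prod_pos) auto

lemma mon_nonneg: "(\<forall>j<m. v j \<ge> 0) \<Longrightarrow> mon m \<beta> v \<ge> 0"
  unfolding mon_def by (intro prod_nonneg) auto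

function lam :: "nat \<Rightarrow> (nat \<Rightarrow> nat \<Rightarrow> real) \<Rightarrow> (nat \<Rightarrow> real) \<Rightarrow> nat \<Rightarrow> real" where
  "lam m A c i = (if i < m then (c i - (\<Sum>k\<in>{i<..<m}. A k i * lam m A c k)) / A i i else 0)"
  by auto
termination
  by (relation "Wellfounded.measure (\<lambda>(m, A, c, i). m - i)") auto

declare lam.simps[simp del]

lemma lam_eq:
  assumes "i < m" "A i i > 0"
  shows "lam m A c i * A i i = c i - (\<Sum>k\<in>{i<..<m}. A k i * lam m A c k)"
  using assms by (subst lam.simps) simp

lemma lam_bounds:
  assumes Apos: "\<forall>i<m. A i i > 0" and Anonneg: "\<forall>i<m. \<forall>j<m. A i j \<ge> 0"
    and H: "\<forall>i<m. (\<Sum>k\<in>{i<..<m}. A k i * (c k / A k k)) \<le> c i"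
  shows "i < m \<Longrightarrow> 0 \<le> lam m A c i \<and> lam m A c i \<le> c i / A i i"
proof (induction "m - i" arbitrary: i rule: less_induct)
  case less
  have IH: "0 \<le> lam m A c k \<and> lam m A c k \<le> c k / A k k" if "k \<in> {i<..<m}" for k
    using less.hyps[of k] that by auto
  have Aii: "A i i > 0" using Apos less.prems by auto
  have s1: "(\<Sum>k\<in>{i<..<m}. A k i * lam m A c k) \<le> (\<Sum>k\<in>{i<..<m}. A k i * (c k / A k k))"
    using IH Anonneg less.prems by (intro sum_mono mult_left_mono) auto
  have s0: "0 \<le> (\<Sum>k\<in>{i<..<m}. A k i * lam m A c k)"
    using IH Anonneg less.prems by (intro sum_nonneg mult_nonneg_nonneg) auto
  have e: "lam m A c i * A i i = c i - (\<Sum>k\<in>{i<..<m}. A k i * lam m A c k)"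
    using lam_eq[of i m A c] less.prems Aii by simp
  have "lam m A c i * A i i \<ge> 0" using e s1 H less.prems by auto
  then have g0: "lam m A c i \<ge> 0" using Aii by (simp add: zero_le_mult_iff)
  have "lam m A c i * A i i \<le> c i" using e s0 by auto
  then have "lam m A c i \<le> c i / A i i" using Aii by (simp add: pos_le_divide_eq)
  then show ?case using g0 by simp
qed

lemma lam_sum:
  assumes Apos: "\<forall>i<m. A i i > 0"
  shows "j < m \<Longrightarrow> (\<Sum>i\<in>{j..<m}. lam m A c i * A i j) = c j"
proof -
  assume j: "j < m"
  have "{j..<m} = insert j {j<..<m}" using j by auto
  then have "(\<Sum>i\<in>{j..<m}. lam m A c i * A i j) = lam m A c j * A j j + (\<Sum>i\<in>{j<..<m}. lam m A c i * A i j)"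
    by simp
  also have "\<dots> = c j" using lam_eq[of j m A c] Apos j by (simp add: mult_ac)
  finally show ?thesis .
qed

lemma triangular_bound:
  fixes g c :: "nat \<Rightarrow> real" and B :: real
  assumes Apos: "\<forall>i<m. A i i > 0" and Anonneg: "\<forall>i<m. \<forall>j<m. A i j \<ge> 0"
    and H: "\<forall>i<m. (\<Sum>k\<in>{i<..<m}. A k i * (c k / A k k)) \<le> c i"
    and rows: "\<forall>i<m. (\<Sum>j\<le>i. A i j * g j) \<le> B" and B0: "B \<ge> 0"
  shows "(\<Sum>j<m. c j * g j) \<le> (\<Sum>i<m. c i / A i i) * B"
proof -
  have "(\<Sum>j<m. c j * g j) = (\<Sum>j<m. (\<Sum>i\<in>{j..<m}. lam m A c i * A i j) * g j)"
    using lam_sum[of m A _ c] Apos by (intro sum.cong) auto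
  also have "\<dots> = (\<Sum>j<m. \<Sum>i\<in>{i. i \<in> {..<m} \<and> j \<le> i}. lam m A c i * A i j * g j)"
    by (intro sum.cong) (auto simp: sum_distrib_right intro!: sum.cong)
  also have "\<dots> = (\<Sum>i<m. \<Sum>j\<in>{j. j \<in> {..<m} \<and> j \<le> i}. lam m A c i * A i j * g j)"
    by (rule sum.swap_restrict) auto
  also have "\<dots> = (\<Sum>i<m. lam m A c i * (\<Sum>j\<le>i. A i j * g j))"
    by (intro sum.cong) (auto simp: sum_distrib_left mult_ac intro!: sum.cong)
  also have "\<dots> \<le> (\<Sum>i<m. lam m A c i * B)"
    using lam_bounds[OF Apos Anonneg H] rows by (intro sum_mono mult_left_mono) auto
  also have "\<dots> \<le> (\<Sum>i<m. c i / A i i * B)"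
    using lam_bounds[OF Apos Anonneg H] B0 by (intro sum_mono mult_right_mono) auto
  also have "\<dots> = (\<Sum>i<m. c i / A i i) * B" by (simp add: sum_distrib_right)
  finally show ?thesis .
qed

definition a0 :: "nat \<Rightarrow> nat \<Rightarrow> (nat \<Rightarrow> real) \<Rightarrow> (nat \<Rightarrow> nat) \<Rightarrow> real" where
  "a0 m p \<theta> \<beta> = multinom m p \<beta> * Th m \<theta> \<beta>"

lemma Dc_a0:
  assumes i: "i < m"
  shows "Dc i (a0 m (Suc n) \<theta>) = (\<lambda>\<gamma>. real (Suc n) * (multinom m n \<gamma> * Th m \<theta> \<gamma> * \<theta> i ^ (2 * \<gamma> i + 1)))"
proof
  fix \<gamma>
  have e: "a0 m (Suc n) \<theta> = (\<lambda>\<beta>. multinom m (Suc n) \<beta> * Th m \<theta> \<beta> * (\<lambda>_. 1) \<beta>)"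
    by (simp add: a0_def fun_eq_iff)
  show "Dc i (a0 m (Suc n) \<theta>) \<gamma> = real (Suc n) * (multinom m n \<gamma> * Th m \<theta> \<gamma> * \<theta> i ^ (2 * \<gamma> i + 1))"
    unfolding e Dc_coef[OF i] by (simp add: mult_ac)
qed

lemma DDc_a0:
  assumes i: "i < m" and j: "j < m"
  shows "Dc j (Dc i (a0 m (Suc (Suc n)) \<theta>)) = (\<lambda>\<delta>. real (Suc (Suc n)) * (real (Suc n) *
     multinom m n \<delta> * Th m \<theta> \<delta> * \<theta> j ^ (2 * \<delta> j + 1) * \<theta> i ^ (2 * (\<delta>(j := Suc (\<delta> j))) i + 1)))"
proof
  fix \<delta>
  have e: "Dc i (a0 m (Suc (Suc n)) \<theta>) = (\<lambda>\<gamma>. real (Suc (Suc n)) *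
      (multinom m (Suc n) \<gamma> * Th m \<theta> \<gamma> * (\<lambda>\<gamma>. \<theta> i ^ (2 * \<gamma> i + 1)) \<gamma>))"
    unfolding Dc_a0[OF i] by simp
  show "Dc j (Dc i (a0 m (Suc (Suc n)) \<theta>)) \<delta> = real (Suc (Suc n)) * (real (Suc n) *
     multinom m n \<delta> * Th m \<theta> \<delta> * \<theta> j ^ (2 * \<delta> j + 1) * \<theta> i ^ (2 * (\<delta>(j := Suc (\<delta> j))) i + 1))"
    unfolding e Dc_cmult Dc_coef[OF j] by simp
qed

lemma mon_le:
  assumes v: "\<forall>j<m. v j \<ge> 0" and b: "\<beta> \<in> multi_indices m k"
  shows "mon m \<beta> v \<le> (1 + (\<Sum>j<m. v j)) ^ k"
proof -
  have "mon m \<beta> v \<le> (\<Prod>j<m. (1 + (\<Sum>j<m. v j)) ^ \<beta> j)"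
    unfolding mon_def
  proof (rule prod_mono)
    fix j assume j: "j \<in> {..<m}"
    have "v j \<le> (\<Sum>j<m. v j)" using j v by (intro member_le_sum) auto
    then show "0 \<le> v j ^ \<beta> j \<and> v j ^ \<beta> j \<le> (1 + (\<Sum>j<m. v j)) ^ \<beta> j"
      using v j by (auto intro: power_mono)
  qed
  also have "\<dots> = (1 + (\<Sum>j<m. v j)) ^ (\<Sum>j<m. \<beta> j)" by (simp add: power_sum)
  also have "\<dots> = (1 + (\<Sum>j<m. v j)) ^ k" using b by (simp add: multi_indices_def)
  finally show ?thesis .
qed

lemma reaction_bound:
  fixes g v :: "nat \<Rightarrow> real" and B :: real
  assumes Apos: "\<forall>i<m. A i i > 0" and Anonneg: "\<forall>i<m. \<forall>j<m. A i j \<ge> 0"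
    and H: "\<forall>\<gamma>\<in>multi_indices m n. \<forall>i<m. (\<Sum>k\<in>{i<..<m}. A k i * (\<theta> k ^ (2 * \<gamma> k + 1) / A k k)) \<le> \<theta> i ^ (2 * \<gamma> i + 1)"
    and rows: "\<forall>i<m. (\<Sum>j\<le>i. A i j * g j) \<le> B" and B0: "B \<ge> 0"
    and v: "\<forall>j<m. v j \<ge> 0" and th: "\<forall>j<m. \<theta> j > 0"
  shows "(\<Sum>i<m. g i * pol m n (Dc i (a0 m (Suc n) \<theta>)) v)
     \<le> (\<Sum>\<gamma>\<in>multi_indices m n. real (Suc n) * multinom m n \<gamma> * Th m \<theta> \<gamma> * (\<Sum>i<m. \<theta> i ^ (2 * \<gamma> i + 1) / A i i))
        * B * (1 + (\<Sum>j<m. v j)) ^ n"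
proof -
  let ?K = "\<lambda>\<gamma>. real (Suc n) * multinom m n \<gamma> * Th m \<theta> \<gamma>"
  have K0: "?K \<gamma> \<ge> 0" for \<gamma> using multinom_pos[of m n \<gamma>] Th_pos[of m \<theta> \<gamma>] th by simp
  have "(\<Sum>i<m. g i * pol m n (Dc i (a0 m (Suc n) \<theta>)) v)
     = (\<Sum>i<m. \<Sum>\<gamma>\<in>multi_indices m n. ?K \<gamma> * mon m \<gamma> v * (\<theta> i ^ (2 * \<gamma> i + 1) * g i))"
    unfolding pol_def
    by (intro sum.cong refl) (simp add: Dc_a0 sum_distrib_left mult_ac)
  also have "\<dots> = (\<Sum>\<gamma>\<in>multi_indices m n. ?K \<gamma> * mon m \<gamma> v * (\<Sum>i<m. \<theta> i ^ (2 * \<gamma> i + 1) * g i))"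
    by (subst sum.swap) (simp add: sum_distrib_left)
  also have "\<dots> \<le> (\<Sum>\<gamma>\<in>multi_indices m n. ?K \<gamma> * mon m \<gamma> v * ((\<Sum>i<m. \<theta> i ^ (2 * \<gamma> i + 1) / A i i) * B))"
  proof (rule sum_mono)
    fix \<gamma> assume g: "\<gamma> \<in> multi_indices m n"
    have "(\<Sum>i<m. \<theta> i ^ (2 * \<gamma> i + 1) * g i) \<le> (\<Sum>i<m. \<theta> i ^ (2 * \<gamma> i + 1) / A i i) * B"
      using H g by (intro triangular_bound[OF Apos Anonneg _ rows B0]) auto
    then show "?K \<gamma> * mon m \<gamma> v * (\<Sum>i<m. \<theta> i ^ (2 * \<gamma> i + 1) * g i)
        \<le> ?K \<gamma> * mon m \<gamma> v * ((\<Sum>i<m. \<theta> i ^ (2 * \<gamma> i + 1) / A i i) * B)"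
      using K0[of \<gamma>] mon_nonneg[of m v \<gamma>] v by (intro mult_left_mono) auto
  qed
  also have "\<dots> \<le> (\<Sum>\<gamma>\<in>multi_indices m n. ?K \<gamma> * (1 + (\<Sum>j<m. v j)) ^ n * ((\<Sum>i<m. \<theta> i ^ (2 * \<gamma> i + 1) / A i i) * B))"
  proof (rule sum_mono)
    fix \<gamma> assume g: "\<gamma> \<in> multi_indices m n"
    have S0: "(\<Sum>i<m. \<theta> i ^ (2 * \<gamma> i + 1) / A i i) \<ge> 0"
      using th Apos by (intro sum_nonneg divide_nonneg_nonneg) (auto simp del: power_Suc)
    show "?K \<gamma> * mon m \<gamma> v * ((\<Sum>i<m. \<theta> i ^ (2 * \<gamma> i + 1) / A i i) * B)
        \<le> ?K \<gamma> * (1 + (\<Sum>j<m. v j)) ^ n * ((\<Sum>i<m. \<theta> i ^ (2 * \<gamma> i + 1) / A i i) * B)"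
      using mon_le[OF v g] K0[of \<gamma>] S0 B0 multinom_pos[of m n \<gamma>] Th_pos[of m \<theta> \<gamma>] th
      by (intro mult_right_mono mult_left_mono mult_nonneg_nonneg) (auto simp del: power_Suc)
  qed
  also have "\<dots> = (\<Sum>\<gamma>\<in>multi_indices m n. ?K \<gamma> * (\<Sum>i<m. \<theta> i ^ (2 * \<gamma> i + 1) / A i i))
        * B * (1 + (\<Sum>j<m. v j)) ^ n"
    by (simp add: sum_distrib_left sum_distrib_right mult_ac)
  finally show ?thesis .
qed

lemma cross_bound:
  fixes a b d dM :: real
  assumes "0 \<le> d" "d \<le> dM"
  shows "d * (a * b) \<ge> - (dM * (a\<^sup>2 + b\<^sup>2) / 2)"
proof -
  have h: "\<bar>a * b\<bar> \<le> (a\<^sup>2 + b\<^sup>2) / 2"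
  proof -
    have "0 \<le> (\<bar>a\<bar> - \<bar>b\<bar>)\<^sup>2" by simp
    then show ?thesis by (simp add: power2_eq_square algebra_simps abs_mult)
  qed
  have "d * (a * b) \<ge> - (d * \<bar>a * b\<bar>)"
  proof -
    have "- \<bar>a * b\<bar> \<le> a * b" by (cases "a * b \<ge> 0") auto
    then have "d * (- \<bar>a * b\<bar>) \<le> d * (a * b)" by (rule mult_left_mono) (rule assms(1))
    then show ?thesis by simp
  qed
  moreover have "d * \<bar>a * b\<bar> \<le> dM * ((a\<^sup>2 + b\<^sup>2) / 2)"
    using assms h by (intro mult_mono) auto
  ultimately show ?thesis by simp
qed

lemma bracket_bound:
  fixes d \<xi> w t :: "nat \<Rightarrow> real" and dM :: real
  assumes d0: "\<forall>i<m. 0 \<le> d i" and dM: "\<forall>i<m. d i \<le> dM"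
    and w1: "\<forall>i<m. w i \<ge> 1"
    and dt: "\<forall>i<m. d i * ((t i)\<^sup>2 - 1) \<ge> real m * dM + 1"
  shows "(\<Sum>i<m. \<Sum>j<m. d i * \<xi> i * \<xi> j * w j * w i * (if i = j then (t i)\<^sup>2 else 1)) \<ge> (\<Sum>i<m. (\<xi> i)\<^sup>2)"
proof -
  define \<eta> where "\<eta> i = w i * \<xi> i" for i
  have split: "(\<Sum>j<m. d i * \<xi> i * \<xi> j * w j * w i * (if i = j then (t i)\<^sup>2 else 1))
      = (\<Sum>j<m. d i * (\<eta> i * \<eta> j)) + d i * ((t i)\<^sup>2 - 1) * (\<eta> i)\<^sup>2" if i: "i < m" for i
  proof -
    have "(\<Sum>j<m. d i * \<xi> i * \<xi> j * w j * w i * (if i = j then (t i)\<^sup>2 else 1))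
        = (\<Sum>j<m. d i * (\<eta> i * \<eta> j) + (if i = j then d i * ((t i)\<^sup>2 - 1) * (\<eta> i)\<^sup>2 else 0))"
      by (intro sum.cong) (auto simp: \<eta>_def power2_eq_square algebra_simps)
    also have "\<dots> = (\<Sum>j<m. d i * (\<eta> i * \<eta> j)) + d i * ((t i)\<^sup>2 - 1) * (\<eta> i)\<^sup>2"
      using i by (simp add: sum.distrib)
    finally show ?thesis .
  qed
  have cross: "(\<Sum>i<m. \<Sum>j<m. d i * (\<eta> i * \<eta> j)) \<ge> - (real m * dM * (\<Sum>i<m. (\<eta> i)\<^sup>2))"
  proof -
    have "(\<Sum>i<m. \<Sum>j<m. d i * (\<eta> i * \<eta> j)) \<ge> (\<Sum>i<m. \<Sum>j<m. - (dM * ((\<eta> i)\<^sup>2 + (\<eta> j)\<^sup>2) / 2))"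
      using d0 dM by (intro sum_mono cross_bound) auto
    moreover have "(\<Sum>i<m. \<Sum>j<m. - (dM * ((\<eta> i)\<^sup>2 + (\<eta> j)\<^sup>2) / 2))
        = (- (dM / 2)) * (\<Sum>i<m. \<Sum>j<m. ((\<eta> i)\<^sup>2 + (\<eta> j)\<^sup>2))"
      unfolding sum_distrib_left by (intro sum.cong refl) simp
    moreover have "(\<Sum>i<m. \<Sum>j<m. ((\<eta> i)\<^sup>2 + (\<eta> j)\<^sup>2)) = 2 * real m * (\<Sum>i<m. (\<eta> i)\<^sup>2)"
      by (simp add: sum.distrib sum_distrib_left algebra_simps)
    ultimately show ?thesis by (simp add: mult_ac)
  qed
  have "(\<Sum>i<m. \<Sum>j<m. d i * \<xi> i * \<xi> j * w j * w i * (if i = j then (t i)\<^sup>2 else 1))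
      = (\<Sum>i<m. \<Sum>j<m. d i * (\<eta> i * \<eta> j)) + (\<Sum>i<m. d i * ((t i)\<^sup>2 - 1) * (\<eta> i)\<^sup>2)"
    using split by (simp add: sum.distrib)
  also have "\<dots> \<ge> - (real m * dM * (\<Sum>i<m. (\<eta> i)\<^sup>2)) + (\<Sum>i<m. (real m * dM + 1) * (\<eta> i)\<^sup>2)"
    using cross dt by (intro add_mono sum_mono mult_right_mono) auto
  finally have "(\<Sum>i<m. \<Sum>j<m. d i * \<xi> i * \<xi> j * w j * w i * (if i = j then (t i)\<^sup>2 else 1))
      \<ge> (\<Sum>i<m. (\<eta> i)\<^sup>2)"
    by (simp add: sum.distrib sum_distrib_left algebra_simps)
  moreover have "(\<Sum>i<m. (\<eta> i)\<^sup>2) \<ge> (\<Sum>i<m. (\<xi> i)\<^sup>2)"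
  proof (rule sum_mono)
    fix i assume "i \<in> {..<m}"
    then have "w i \<ge> 1" using w1 by auto
    then have "(w i)\<^sup>2 \<ge> 1" by (simp add: one_le_power)
    then have "(w i)\<^sup>2 * (\<xi> i)\<^sup>2 \<ge> 1 * (\<xi> i)\<^sup>2" by (intro mult_right_mono) auto
    then show "(\<xi> i)\<^sup>2 \<le> (\<eta> i)\<^sup>2" by (simp add: \<eta>_def power_mult_distrib)
  qed
  ultimately show ?thesis by linarith
qed

lemma unit_MI:
  assumes i: "i < m"
  shows "(\<lambda>j. if j = i then n else 0) \<in> multi_indices m n"
  using i by (auto simp: multi_indices_def)

lemma unit_mon:
  assumes i: "i < m"
  shows "mon m (\<lambda>j. if j = i then n else 0) v = v i ^ n"
proof -
  have "mon m (\<lambda>j. if j = i then n else 0) v = (\<Prod>j<m. if j = i then v j ^ n else 1)"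
    unfolding mon_def by (intro prod.cong) auto
  also have "\<dots> = v i ^ n" using i by (simp add: prod.delta)
  finally show ?thesis .
qed

lemma unit_multinom:
  assumes i: "i < m"
  shows "multinom m n (\<lambda>j. if j = i then n else 0) = 1"
proof -
  have "(\<Prod>j<m. real (fact (if j = i then n else 0))) = (\<Prod>j<m. if j = i then real (fact n) else 1)"
    by (intro prod.cong) auto
  also have "\<dots> = real (fact n)" using i by (simp add: prod.delta)
  finally show ?thesis unfolding multinom_def by simp
qed

lemma diffusion_bound:
  fixes d \<xi> v \<theta> :: "nat \<Rightarrow> real" and dM :: real
  assumes d0: "\<forall>i<m. 0 \<le> d i" and dM: "\<forall>i<m. d i \<le> dM"
    and th1: "\<forall>i<m. \<theta> i \<ge> 1"
    and dt: "\<forall>i<m. d i * ((\<theta> i)\<^sup>2 - 1) \<ge> real m * dM + 1"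
    and v: "\<forall>j<m. v j \<ge> 0"
  shows "(\<Sum>i<m. d i * ((\<Sum>j<m. \<xi> j * pol m n (Dc j (Dc i (a0 m (Suc (Suc n)) \<theta>))) v) * \<xi> i))
     \<ge> real (Suc (Suc n)) * real (Suc n) * (\<Sum>i<m. v i ^ n * (\<xi> i)\<^sup>2)"
proof -
  let ?K = "\<lambda>\<delta>. real (Suc (Suc n)) * real (Suc n) * multinom m n \<delta> * Th m \<theta> \<delta> * mon m \<delta> v"
  let ?w = "\<lambda>\<delta> k. \<theta> k ^ (2 * \<delta> k + 1)"
  let ?Br = "\<lambda>\<delta>. (\<Sum>i<m. \<Sum>j<m. d i * \<xi> i * \<xi> j * ?w \<delta> j * ?w \<delta> i * (if i = j then (\<theta> i)\<^sup>2 else 1))"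
  have K0: "?K \<delta> \<ge> 0" for \<delta>
    using multinom_pos[of m n \<delta>] Th_ge1[of m \<theta> \<delta>] th1 mon_nonneg[of m v \<delta>] v by simp
  have pw: "\<theta> i ^ (2 * (\<delta>(j := Suc (\<delta> j))) i + 1) = ?w \<delta> i * (if i = j then (\<theta> i)\<^sup>2 else 1)" for i j \<delta>
    by (auto simp: power_add power2_eq_square mult_ac)
  have "(\<Sum>i<m. d i * ((\<Sum>j<m. \<xi> j * pol m n (Dc j (Dc i (a0 m (Suc (Suc n)) \<theta>))) v) * \<xi> i))
      = (\<Sum>i<m. \<Sum>j<m. \<Sum>\<delta>\<in>multi_indices m n. ?K \<delta> * (d i * \<xi> i * \<xi> j * ?w \<delta> j * ?w \<delta> i * (if i = j then (\<theta> i)\<^sup>2 else 1)))"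
  proof (intro sum.cong refl)
    fix i assume i: "i \<in> {..<m}"
    have "d i * ((\<Sum>j<m. \<xi> j * pol m n (Dc j (Dc i (a0 m (Suc (Suc n)) \<theta>))) v) * \<xi> i)
        = (\<Sum>j<m. d i * \<xi> i * (\<xi> j * pol m n (Dc j (Dc i (a0 m (Suc (Suc n)) \<theta>))) v))"
      by (simp add: sum_distrib_left sum_distrib_right mult_ac)
    also have "\<dots> = (\<Sum>j<m. \<Sum>\<delta>\<in>multi_indices m n. ?K \<delta> * (d i * \<xi> i * \<xi> j * ?w \<delta> j * ?w \<delta> i * (if i = j then (\<theta> i)\<^sup>2 else 1)))"
    proof (intro sum.cong refl)
      fix j assume j: "j \<in> {..<m}"
      show "d i * \<xi> i * (\<xi> j * pol m n (Dc j (Dc i (a0 m (Suc (Suc n)) \<theta>))) v)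
        = (\<Sum>\<delta>\<in>multi_indices m n. ?K \<delta> * (d i * \<xi> i * \<xi> j * ?w \<delta> j * ?w \<delta> i * (if i = j then (\<theta> i)\<^sup>2 else 1)))"
      proof -
        have i': "i < m" and j': "j < m" using i j by auto
        show ?thesis
          unfolding pol_def DDc_a0[OF i' j'] by (simp add: sum_distrib_left pw power2_eq_square mult_ac)
      qed
    qed
    finally show "d i * ((\<Sum>j<m. \<xi> j * pol m n (Dc j (Dc i (a0 m (Suc (Suc n)) \<theta>))) v) * \<xi> i)
        = (\<Sum>j<m. \<Sum>\<delta>\<in>multi_indices m n. ?K \<delta> * (d i * \<xi> i * \<xi> j * ?w \<delta> j * ?w \<delta> i * (if i = j then (\<theta> i)\<^sup>2 else 1)))" .
  qed
  also have "\<dots> = (\<Sum>i<m. \<Sum>\<delta>\<in>multi_indices m n. \<Sum>j<m. ?K \<delta> * (d i * \<xi> i * \<xi> j * ?w \<delta> j * ?w \<delta> i * (if i = j then (\<theta> i)\<^sup>2 else 1)))"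
    by (intro sum.cong refl sum.swap)
  also have "\<dots> = (\<Sum>\<delta>\<in>multi_indices m n. \<Sum>i<m. \<Sum>j<m. ?K \<delta> * (d i * \<xi> i * \<xi> j * ?w \<delta> j * ?w \<delta> i * (if i = j then (\<theta> i)\<^sup>2 else 1)))"
    by (rule sum.swap)
  also have "\<dots> = (\<Sum>\<delta>\<in>multi_indices m n. ?K \<delta> * ?Br \<delta>)"
    by (simp add: sum_distrib_left)
  also have "\<dots> \<ge> (\<Sum>\<delta>\<in>multi_indices m n. ?K \<delta> * (\<Sum>i<m. (\<xi> i)\<^sup>2))"
  proof (rule sum_mono)
    fix \<delta> assume "\<delta> \<in> multi_indices m n"
    have w1: "\<forall>i<m. ?w \<delta> i \<ge> 1" using th1 by (auto intro: one_le_power simp del: power_Suc)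
    have "?Br \<delta> \<ge> (\<Sum>i<m. (\<xi> i)\<^sup>2)"
      by (rule bracket_bound[OF d0 dM w1 dt])
    then show "?K \<delta> * (\<Sum>i<m. (\<xi> i)\<^sup>2) \<le> ?K \<delta> * ?Br \<delta>"
      using K0[of \<delta>] by (intro mult_left_mono) auto
  qed
  finally have A0: "(\<Sum>\<delta>\<in>multi_indices m n. ?K \<delta> * (\<Sum>i<m. (\<xi> i)\<^sup>2)) \<le> (\<Sum>i<m. d i * ((\<Sum>j<m. \<xi> j * pol m n (Dc j (Dc i (a0 m (Suc (Suc n)) \<theta>))) v) * \<xi> i))" .
  have e1: "(\<Sum>\<delta>\<in>multi_indices m n. ?K \<delta> * (\<Sum>i<m. (\<xi> i)\<^sup>2)) = (\<Sum>\<delta>\<in>multi_indices m n. ?K \<delta>) * (\<Sum>i<m. (\<xi> i)\<^sup>2)"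
    by (rule sum_distrib_right[symmetric])
  have e2: "(\<Sum>i<m. (\<xi> i)\<^sup>2 * (\<Sum>\<delta>\<in>multi_indices m n. ?K \<delta>)) = (\<Sum>i<m. (\<xi> i)\<^sup>2) * (\<Sum>\<delta>\<in>multi_indices m n. ?K \<delta>)"
    by (rule sum_distrib_right[symmetric])
  have A: "(\<Sum>i<m. d i * ((\<Sum>j<m. \<xi> j * pol m n (Dc j (Dc i (a0 m (Suc (Suc n)) \<theta>))) v) * \<xi> i))
     \<ge> (\<Sum>i<m. (\<xi> i)\<^sup>2 * (\<Sum>\<delta>\<in>multi_indices m n. ?K \<delta>))"
    using A0 unfolding e1 e2 by (simp add: mult.commute)
  have "(\<Sum>i<m. (\<xi> i)\<^sup>2 * (\<Sum>\<delta>\<in>multi_indices m n. ?K \<delta>))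
     \<ge> (\<Sum>i<m. (\<xi> i)\<^sup>2 * (real (Suc (Suc n)) * real (Suc n) * v i ^ n))"
  proof (rule sum_mono)
    fix i assume i: "i \<in> {..<m}"
    let ?e = "\<lambda>j. if j = i then n else 0"
    have "?K ?e \<le> (\<Sum>\<delta>\<in>multi_indices m n. ?K \<delta>)"
      using i K0 by (intro member_le_sum finite_MI unit_MI) auto
    moreover have "?K ?e \<ge> real (Suc (Suc n)) * real (Suc n) * v i ^ n"
    proof -
      have i': "i < m" using i by simp
      have m1: "multinom m n ?e = 1" by (rule unit_multinom[OF i'])
      have mo: "mon m ?e v = v i ^ n" by (rule unit_mon[OF i'])
      have k: "?K ?e = (real (Suc (Suc n)) * real (Suc n)) * (Th m \<theta> ?e * v i ^ n)"
        unfolding m1 mo by (simp add: mult_ac)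
      have t1: "Th m \<theta> ?e \<ge> 1" using Th_ge1 th1 by blast
      have v0: "v i ^ n \<ge> 0" using v i by auto
      have "v i ^ n \<le> Th m \<theta> ?e * v i ^ n"
        using mult_right_mono[OF t1 v0] by simp
      then have "(real (Suc (Suc n)) * real (Suc n)) * v i ^ n \<le> (real (Suc (Suc n)) * real (Suc n)) * (Th m \<theta> ?e * v i ^ n)"
        by (intro mult_left_mono) auto
      then show ?thesis unfolding k by simp
    qed
    ultimately have "real (Suc (Suc n)) * real (Suc n) * v i ^ n \<le> (\<Sum>\<delta>\<in>multi_indices m n. ?K \<delta>)"
      by (rule order_trans[rotated])
    then show "(\<xi> i)\<^sup>2 * (real (Suc (Suc n)) * real (Suc n) * v i ^ n) \<le> (\<xi> i)\<^sup>2 * (\<Sum>\<delta>\<in>multi_indices m n. ?K \<delta>)"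
      by (rule mult_left_mono) simp
  qed
  with A show ?thesis by (simp add: sum_distrib_left mult_ac)
qed

definition Bc :: "nat \<Rightarrow> (nat \<Rightarrow> nat \<Rightarrow> real) \<Rightarrow> (nat \<Rightarrow> real) \<Rightarrow> real" where
  "Bc m A d = 2 + (\<Sum>i<m. \<Sum>k<m. A k i / A k k) + (real m * (\<Sum>k<m. d k) + 1) * (\<Sum>k<m. 1 / d k)"

definition thc :: "nat \<Rightarrow> nat \<Rightarrow> (nat \<Rightarrow> nat \<Rightarrow> real) \<Rightarrow> (nat \<Rightarrow> real) \<Rightarrow> nat \<Rightarrow> real" where
  "thc m n A d i = Bc m A d ^ ((2 * Suc (Suc n)) ^ (m - i))"

lemma Bc_ge:
  assumes Apos: "\<forall>i<m. A i i > 0" and Anonneg: "\<forall>i<m. \<forall>j<m. A i j \<ge> 0" and dpos: "\<forall>i<m. d i > 0"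
  shows "Bc m A d \<ge> 2" "\<forall>i<m. (\<Sum>k\<in>{i<..<m}. A k i / A k k) \<le> Bc m A d"
    "\<forall>i<m. (real m * (\<Sum>k<m. d k) + 1) / d i \<le> Bc m A d"
proof -
  have R0: "(\<Sum>i<m. \<Sum>k<m. A k i / A k k) \<ge> 0"
    using Apos Anonneg by (intro sum_nonneg divide_nonneg_nonneg) auto
  have D0: "(real m * (\<Sum>k<m. d k) + 1) * (\<Sum>k<m. 1 / d k) \<ge> 0"
    using dpos by (intro mult_nonneg_nonneg sum_nonneg add_nonneg_nonneg) (auto simp: less_imp_le)
  show "Bc m A d \<ge> 2" unfolding Bc_def using R0 D0 by simp
  show "\<forall>i<m. (\<Sum>k\<in>{i<..<m}. A k i / A k k) \<le> Bc m A d"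
  proof (intro allI impI)
    fix i assume i: "i < m"
    have "(\<Sum>k\<in>{i<..<m}. A k i / A k k) \<le> (\<Sum>k<m. A k i / A k k)"
      using Apos Anonneg i by (intro sum_mono2) auto
    also have "\<dots> \<le> (\<Sum>i<m. \<Sum>k<m. A k i / A k k)"
      using i Apos Anonneg by (intro member_le_sum[where f = "\<lambda>i. \<Sum>k<m. A k i / A k k"] sum_nonneg divide_nonneg_nonneg) auto
    finally show "(\<Sum>k\<in>{i<..<m}. A k i / A k k) \<le> Bc m A d" unfolding Bc_def using D0 by simp
  qed
  show "\<forall>i<m. (real m * (\<Sum>k<m. d k) + 1) / d i \<le> Bc m A d"
  proof (intro allI impI)
    fix i assume i: "i < m"
    have "1 / d i \<le> (\<Sum>k<m. 1 / d k)"
      using i dpos by (intro member_le_sum[where f = "\<lambda>k. 1 / d k"]) (auto simp: less_imp_le)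
    then have "(real m * (\<Sum>k<m. d k) + 1) * (1 / d i) \<le> (real m * (\<Sum>k<m. d k) + 1) * (\<Sum>k<m. 1 / d k)"
      using dpos by (intro mult_left_mono add_nonneg_nonneg mult_nonneg_nonneg sum_nonneg) (auto simp: less_imp_le)
    then show "(real m * (\<Sum>k<m. d k) + 1) / d i \<le> Bc m A d" unfolding Bc_def using R0 by simp
  qed
qed

lemma thc_props:
  assumes Apos: "\<forall>i<m. A i i > 0" and Anonneg: "\<forall>i<m. \<forall>j<m. A i j \<ge> 0" and dpos: "\<forall>i<m. d i > 0"
  shows "\<forall>i<m. thc m n A d i \<ge> Bc m A d"
    "\<forall>i<m. d i * ((thc m n A d i)\<^sup>2 - 1) \<ge> real m * (\<Sum>k<m. d k) + 1"
    "\<forall>\<gamma>\<in>multi_indices m (Suc n). \<forall>i<m. (\<Sum>k\<in>{i<..<m}. A k i * (thc m n A d k ^ (2 * \<gamma> k + 1) / A k k))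
        \<le> thc m n A d i ^ (2 * \<gamma> i + 1)"
proof -
  let ?B = "Bc m A d"
  let ?N = "2 * Suc (Suc n)"
  have B2: "?B \<ge> 2" using Bc_ge[OF assms] by simp
  have B1: "?B \<ge> 1" using B2 by simp
  have thB: "thc m n A d i \<ge> ?B" if "i < m" for i
  proof -
    have "?B ^ 1 \<le> ?B ^ (?N ^ (m - i))"
      using B1 by (intro power_increasing) auto
    then show ?thesis unfolding thc_def by simp
  qed
  show "\<forall>i<m. thc m n A d i \<ge> ?B" using thB by auto
  show "\<forall>i<m. d i * ((thc m n A d i)\<^sup>2 - 1) \<ge> real m * (\<Sum>k<m. d k) + 1"
  proof (intro allI impI)
    fix i assume i: "i < m"
    have "(thc m n A d i)\<^sup>2 \<ge> ?B\<^sup>2" using thB[OF i] B1 by (intro power_mono) auto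
    moreover have "?B\<^sup>2 - 1 \<ge> ?B"
    proof -
      have "?B * ?B \<ge> 2 * ?B" using B2 by (intro mult_right_mono) auto
      then show ?thesis using B2 unfolding power2_eq_square by linarith
    qed
    ultimately have t: "(thc m n A d i)\<^sup>2 - 1 \<ge> ?B" by simp
    have "(real m * (\<Sum>k<m. d k) + 1) / d i \<le> ?B" using Bc_ge(3)[OF assms] i by auto
    then have "real m * (\<Sum>k<m. d k) + 1 \<le> d i * ?B" using dpos i by (simp add: divide_le_eq mult.commute)
    also have "\<dots> \<le> d i * ((thc m n A d i)\<^sup>2 - 1)" using t dpos i by (intro mult_left_mono) auto
    finally show "d i * ((thc m n A d i)\<^sup>2 - 1) \<ge> real m * (\<Sum>k<m. d k) + 1" .
  qed
  show "\<forall>\<gamma>\<in>multi_indices m (Suc n). \<forall>i<m. (\<Sum>k\<in>{i<..<m}. A k i * (thc m n A d k ^ (2 * \<gamma> k + 1) / A k k))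
        \<le> thc m n A d i ^ (2 * \<gamma> i + 1)"
  proof (intro ballI allI impI)
    fix \<gamma> i assume g: "\<gamma> \<in> multi_indices m (Suc n)" and i: "i < m"
    let ?X = "?B ^ ((?N - 1) * ?N ^ (m - Suc i))"
    have X0: "?X \<ge> 0" using B1 by simp
    have gk: "\<gamma> k \<le> Suc n" if "k < m" for k
    proof -
      have "\<gamma> k \<le> (\<Sum>j<m. \<gamma> j)" using that by (intro member_le_sum) auto
      then show ?thesis using g by (simp add: multi_indices_def)
    qed
    have bound_k: "thc m n A d k ^ (2 * \<gamma> k + 1) \<le> ?X" if k: "k \<in> {i<..<m}" for k
    proof -
      have th1: "thc m n A d k \<ge> 1" using thB[of k] k B1 by auto
      have "thc m n A d k ^ (2 * \<gamma> k + 1) \<le> thc m n A d k ^ (?N - 1)"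
        using th1 gk[of k] k by (intro power_increasing) auto
      also have "\<dots> = ?B ^ (?N ^ (m - k) * (?N - 1))" unfolding thc_def by (rule power_mult[symmetric])
      also have "\<dots> \<le> ?B ^ (?N ^ (m - Suc i) * (?N - 1))"
      proof -
        have "?N ^ (m - k) \<le> ?N ^ (m - Suc i)" using k by (intro power_increasing) auto
        then have "?N ^ (m - k) * (?N - 1) \<le> ?N ^ (m - Suc i) * (?N - 1)" by (rule mult_right_mono) simp
        then show ?thesis using B1 by (intro power_increasing) auto
      qed
      finally show ?thesis by (simp add: mult.commute)
    qed
    have "(\<Sum>k\<in>{i<..<m}. A k i * (thc m n A d k ^ (2 * \<gamma> k + 1) / A k k))
        \<le> (\<Sum>k\<in>{i<..<m}. A k i / A k k * ?X)"
    proof (rule sum_mono)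
      fix k assume k: "k \<in> {i<..<m}"
      have "A k i * (thc m n A d k ^ (2 * \<gamma> k + 1) / A k k) = A k i / A k k * thc m n A d k ^ (2 * \<gamma> k + 1)"
        by simp
      also have "\<dots> \<le> A k i / A k k * ?X"
        using bound_k[OF k] Apos Anonneg k i by (intro mult_left_mono divide_nonneg_nonneg) auto
      finally show "A k i * (thc m n A d k ^ (2 * \<gamma> k + 1) / A k k) \<le> A k i / A k k * ?X" .
    qed
    also have "\<dots> = (\<Sum>k\<in>{i<..<m}. A k i / A k k) * ?X" by (simp add: sum_distrib_right)
    also have "\<dots> \<le> ?B * ?X" using Bc_ge(2)[OF assms] i X0 by (intro mult_right_mono) auto
    also have "\<dots> \<le> thc m n A d i"
    proof -
      have e: "?N ^ (m - i) = ?N ^ (m - Suc i) + (?N - 1) * ?N ^ (m - Suc i)"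
      proof -
        have "m - i = Suc (m - Suc i)" using i by simp
        then have "?N ^ (m - i) = ?N * ?N ^ (m - Suc i)" by simp
        also have "\<dots> = ?N ^ (m - Suc i) + (?N - 1) * ?N ^ (m - Suc i)" by (simp add: algebra_simps)
        finally show ?thesis .
      qed
      have "?B * ?X \<le> ?B ^ (?N ^ (m - Suc i)) * ?X"
      proof (rule mult_right_mono[OF _ X0])
        have "?N ^ (m - Suc i) \<ge> 1" by simp
        then show "?B \<le> ?B ^ (?N ^ (m - Suc i))"
          using power_increasing[of 1 "?N ^ (m - Suc i)" ?B] B1 by simp
      qed
      also have "\<dots> = thc m n A d i" unfolding thc_def e power_add ..
      finally show ?thesis .
    qed
    also have "\<dots> \<le> thc m n A d i ^ (2 * \<gamma> i + 1)"
    proof -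
      have "thc m n A d i \<ge> 1" using thB[OF i] B1 by simp
      then show ?thesis using power_increasing[of 1 "2 * \<gamma> i + 1" "thc m n A d i"] by simp
    qed
    finally show "(\<Sum>k\<in>{i<..<m}. A k i * (thc m n A d k ^ (2 * \<gamma> k + 1) / A k k))
        \<le> thc m n A d i ^ (2 * \<gamma> i + 1)" .
  qed
qed

lemma pol_cont:
  assumes "\<And>j. j < m \<Longrightarrow> continuous_on S (F j)"
  shows "continuous_on S (\<lambda>z. pol m k a (\<lambda>j. F j z))"
  unfolding pol_def mon_def using assms
  by (intro continuous_intros) auto

lemma AE_cont_le:
  fixes h :: "'a::euclidean_space \<Rightarrow> real"
  assumes S: "open S" and h: "continuous_on S h"
    and ae: "AE z in lborel. z \<in> S \<longrightarrow> h z \<le> 0"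
    and z0: "z0 \<in> S"
  shows "h z0 \<le> 0"
proof (rule ccontr)
  assume "\<not> h z0 \<le> 0"
  let ?W = "h -` {0<..} \<inter> S"
  have Wopen: "open ?W" using continuous_on_open_vimage[OF S, of h] h by (meson open_greaterThan)
  have "z0 \<in> ?W" using z0 \<open>\<not> h z0 \<le> 0\<close> by auto
  then have Wne: "?W \<noteq> {}" by blast
  obtain N where N: "N \<in> null_sets lborel" "{z \<in> space lborel. \<not> (z \<in> S \<longrightarrow> h z \<le> 0)} \<subseteq> N"
    using ae unfolding eventually_ae_filter by blast
  have "?W \<subseteq> N" using N(2) by auto
  moreover have "N \<in> null_sets lebesgue" using N(1) by (rule null_sets_completionI)
  ultimately have "negligible ?W"
    by (meson negligible_iff_null_sets negligible_subset)
  then show False using open_not_negligible[OF Wopen Wne] by simp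
qed

lemma ibp_neumann:
  fixes \<phi> \<phi>' w w' :: "real \<Rightarrow> real" and L :: real
  assumes L: "0 \<le> L"
    and d\<phi>: "\<And>x. x \<in> {0..L} \<Longrightarrow> (\<phi> has_real_derivative \<phi>' x) (at x within {0..L})"
    and dw: "\<And>x. x \<in> {0..L} \<Longrightarrow> (w has_real_derivative w' x) (at x within {0..L})"
    and c1: "continuous_on {0..L} \<phi>'" and c2: "continuous_on {0..L} w'"
    and w0: "w 0 = 0" and wL: "w L = 0"
  shows "integral {0..L} (\<lambda>x. \<phi> x * w' x) = - integral {0..L} (\<lambda>x. \<phi>' x * w x)"
proof -
  have c\<phi>: "continuous_on {0..L} \<phi>"
    using d\<phi> by (meson DERIV_continuous continuous_at_imp_continuous_on continuous_on_eq_continuous_within)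
  have cw: "continuous_on {0..L} w"
    using dw by (meson DERIV_continuous continuous_at_imp_continuous_on continuous_on_eq_continuous_within)
  have "((\<lambda>x. \<phi>' x * w x + \<phi> x * w' x) has_integral (\<phi> L * w L - \<phi> 0 * w 0)) {0..L}"
  proof (rule fundamental_theorem_of_calculus[OF L])
    fix x assume x: "x \<in> {0..L}"
    have "((\<lambda>x. \<phi> x * w x) has_real_derivative (\<phi>' x * w x + \<phi> x * w' x)) (at x within {0..L})"
      using d\<phi>[OF x] dw[OF x] by (auto intro!: derivative_eq_intros)
    then show "((\<lambda>x. \<phi> x * w x) has_vector_derivative (\<phi>' x * w x + \<phi> x * w' x)) (at x within {0..L})"
      by (simp add: has_real_derivative_iff_has_vector_derivative)
  qed
  then have "integral {0..L} (\<lambda>x. \<phi>' x * w x + \<phi> x * w' x) = 0"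
    using w0 wL by (simp add: integral_unique)
  moreover have "integral {0..L} (\<lambda>x. \<phi>' x * w x + \<phi> x * w' x)
      = integral {0..L} (\<lambda>x. \<phi>' x * w x) + integral {0..L} (\<lambda>x. \<phi> x * w' x)"
    by (intro integral_add integrable_continuous_interval continuous_intros c\<phi> cw c1 c2)
  ultimately show ?thesis by simp
qed

lemma powr_sum_bound:
  fixes v :: "nat \<Rightarrow> real" and q :: real
  assumes v: "\<forall>j<m. v j \<ge> 0" and q: "q > 0"
  shows "(1 + (\<Sum>j<m. v j)) powr q \<le> (real m + 1) powr q * (1 + (\<Sum>j<m. v j powr q))"
proof -
  define M where "M = Max (insert 1 (v ` {..<m}))"
  have M1: "M \<ge> 1" unfolding M_def by simp
  have vM: "v j \<le> M" if "j < m" for j unfolding M_def using that by (intro Max_ge) auto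
  have "(\<Sum>j<m. v j) \<le> (\<Sum>j<m. M)" using vM by (intro sum_mono) auto
  then have "1 + (\<Sum>j<m. v j) \<le> (real m + 1) * M" using M1 by (simp add: algebra_simps)
  then have "(1 + (\<Sum>j<m. v j)) powr q \<le> ((real m + 1) * M) powr q"
  proof -
    have "0 \<le> (\<Sum>j<m. v j)" using v by (intro sum_nonneg) auto
    then show ?thesis using q \<open>1 + (\<Sum>j<m. v j) \<le> (real m + 1) * M\<close> by (intro powr_mono2) auto
  qed
  also have "\<dots> = (real m + 1) powr q * M powr q" using M1 by (simp add: powr_mult)
  also have "M powr q \<le> 1 + (\<Sum>j<m. v j powr q)"
  proof -
    have "M \<in> insert 1 (v ` {..<m})" unfolding M_def by (intro Max_in) auto
    then consider "M = 1" | j where "j < m" "M = v j" by auto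
    then show ?thesis
    proof cases
      case 1
      have "(\<Sum>j<m. v j powr q) \<ge> 0" by (intro sum_nonneg) auto
      then show ?thesis using 1 by simp
    next
      case 2
      have "v j powr q \<le> (\<Sum>j<m. v j powr q)" using 2 by (intro member_le_sum) auto
      then show ?thesis using 2 by simp
    qed
  qed
  then have "(real m + 1) powr q * M powr q \<le> (real m + 1) powr q * (1 + (\<Sum>j<m. v j powr q))"
    by (intro mult_left_mono) auto
  finally show ?thesis .
qed

lemma deriv_powr_sq:
  fixes w :: "real \<Rightarrow> real" and p :: nat and L x w' :: real
  assumes p: "p \<ge> 2" and x: "0 < x" "x < L"
    and nonneg: "\<forall>y\<in>{0..L}. w y \<ge> 0"
    and dw: "(w has_real_derivative w') (at x)"
  shows "(deriv (\<lambda>y. w y powr (real p / 2)) x)\<^sup>2 = (real p / 2)\<^sup>2 * (w x ^ (p - 2) * w'\<^sup>2)"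
proof -
  define a where "a = real p / 2"
  have a1: "a \<ge> 1" using p unfolding a_def by simp
  have wx0: "w x \<ge> 0" using nonneg x by auto
  show ?thesis
  proof (cases "w x > 0")
    case True
    have D: "((\<lambda>y. w y powr a) has_real_derivative (w x powr a * (0 * ln (w x) + w' * a / w x))) (at x)"
      using DERIV_powr[OF dw True DERIV_const[of a]] by simp
    have dv: "deriv (\<lambda>y. w y powr a) x = w x powr a * (w' * a / w x)"
      using DERIV_imp_deriv[OF D] by simp
    have P2: "(w x powr a)\<^sup>2 = w x ^ p"
    proof -
      have "(w x powr a)\<^sup>2 = w x powr (2 * a)"
        using True by (simp add: power2_eq_square powr_add[symmetric])
      also have "\<dots> = w x powr (real p)" unfolding a_def by simp
      also have "\<dots> = w x ^ p" using True by (simp add: powr_realpow)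
      finally show ?thesis .
    qed
    have Wp: "w x ^ p = w x ^ (p - 2) * (w x)\<^sup>2"
    proof -
      have "p = (p - 2) + 2" using p by simp
      then have "w x ^ p = w x ^ ((p - 2) + 2)" by simp
      also have "\<dots> = w x ^ (p - 2) * (w x)\<^sup>2" by (rule power_add)
      finally show ?thesis .
    qed
    have "(deriv (\<lambda>y. w y powr a) x)\<^sup>2 = (w x powr a)\<^sup>2 * ((w' * a)\<^sup>2 / (w x)\<^sup>2)"
      unfolding dv by (simp add: power_mult_distrib power_divide)
    also have "\<dots> = w x ^ (p - 2) * (w x)\<^sup>2 * ((w' * a)\<^sup>2 / (w x)\<^sup>2)" unfolding P2 Wp ..
    also have "\<dots> = w x ^ (p - 2) * (w' * a)\<^sup>2" using True by simp
    finally show ?thesis unfolding a_def[symmetric] by (simp add: power_mult_distrib mult_ac)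
  next
    case False
    then have wx: "w x = 0" using wx0 by simp
    define \<delta> where "\<delta> = min x (L - x)"
    have \<delta>: "\<delta> > 0" using x unfolding \<delta>_def by simp
    have w'0: "w' = 0"
    proof (rule DERIV_local_min[OF dw \<delta>])
      show "\<forall>y. \<bar>x - y\<bar> < \<delta> \<longrightarrow> w x \<le> w y"
      proof (intro allI impI)
        fix y assume "\<bar>x - y\<bar> < \<delta>"
        then have "y \<in> {0..L}" unfolding \<delta>_def by (auto simp: abs_if split: if_splits)
        then show "w x \<le> w y" using nonneg unfolding wx by auto
      qed
    qed
    have ev_in: "eventually (\<lambda>y. y \<in> {0<..<L}) (at x)"
      using x by (intro eventually_at_in_open') auto
    have cont: "(w \<longlongrightarrow> 0) (at x)"
      using DERIV_isCont[OF dw] wx by (simp add: isCont_def)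
    have ev1: "eventually (\<lambda>y. w y < 1) (at x)"
      using order_tendstoD(2)[OF cont, of 1] by simp
    have q: "((\<lambda>y. (w y - w x) / (y - x)) \<longlongrightarrow> 0) (at x)"
      using dw w'0 by (simp add: has_field_derivative_iff)
    have "((\<lambda>y. (w y powr a - w x powr a) / (y - x)) \<longlongrightarrow> 0) (at x)"
    proof (rule Lim_null_comparison)
      show "((\<lambda>y. \<bar>(w y - w x) / (y - x)\<bar>) \<longlongrightarrow> 0) (at x)"
        by (rule tendsto_rabs_zero[OF q])
      show "eventually (\<lambda>y. norm ((w y powr a - w x powr a) / (y - x)) \<le> \<bar>(w y - w x) / (y - x)\<bar>) (at x)"
        using ev_in ev1
      proof eventually_elim
        case (elim y)
        have wy0: "w y \<ge> 0" using nonneg elim(1) by auto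
        have "w y powr a \<le> w y powr 1"
          using elim(2) wy0 a1 by (intro powr_mono') auto
        also have "\<dots> = w y" using wy0 by (cases "w y = 0") auto
        finally have le: "w y powr a \<le> w y" .
        have ge: "w y powr a \<ge> 0" by simp
        show ?case unfolding wx using le ge wy0
          by (simp add: abs_divide divide_right_mono)
      qed
    qed
    then have "((\<lambda>y. w y powr a) has_real_derivative 0) (at x)"
      by (simp add: has_field_derivative_iff)
    then have "deriv (\<lambda>y. w y powr a) x = 0" by (rule DERIV_imp_deriv)
    then show ?thesis unfolding a_def[symmetric] using w'0 by simp
  qed
qed

lemma energy_pol:
  "energy m p \<theta> L u s = integral {0..L} (\<lambda>x. pol m p (a0 m p \<theta>) (\<lambda>j. u j x s))"
  unfolding energy_def pol_def a0_def Th_def mon_def by (simp add: mult_ac)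

lemma cont_slice:
  fixes h :: "real \<Rightarrow> real \<Rightarrow> real"
  assumes "continuous_on (X \<times> Y) (\<lambda>z. h (fst z) (snd z))" "t \<in> Y"
  shows "continuous_on X (\<lambda>x. h x t)"
proof -
  have "continuous_on X (\<lambda>x. (\<lambda>z. h (fst z) (snd z)) ((\<lambda>x. (x, t)) x))"
    by (rule continuous_on_compose2[OF assms(1)]) (use assms(2) in \<open>auto intro!: continuous_intros\<close>)
  then show ?thesis by simp
qed

lemma cont_swap:
  fixes h :: "real \<Rightarrow> real \<Rightarrow> real"
  assumes "continuous_on (X \<times> Y) (\<lambda>z. h (fst z) (snd z))" "U \<subseteq> Y"
  shows "continuous_on (U \<times> X) (\<lambda>z. h (snd z) (fst z))"
proof -
  have "continuous_on (U \<times> X) (\<lambda>z. (\<lambda>z. h (fst z) (snd z)) ((\<lambda>z. (snd z, fst z)) z))"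
    by (rule continuous_on_compose2[OF assms(1)]) (use assms(2) in \<open>auto intro!: continuous_intros\<close>)
  then show ?thesis by simp
qed

lemma integral_le_interior:
  fixes f g :: "real \<Rightarrow> real"
  assumes f: "f integrable_on {0..L}" and g: "g integrable_on {0..L}"
    and le: "\<And>x. x \<in> {0<..<L} \<Longrightarrow> f x \<le> g x"
  shows "integral {0..L} f \<le> integral {0..L} g"
proof -
  let ?f = "\<lambda>x. if x \<in> {0, L} then g x else f x"
  have neg: "negligible {0, L}" by auto
  have "integral {0..L} f = integral {0..L} ?f"
    by (rule integral_spike[OF neg]) auto
  moreover have "?f integrable_on {0..L}"
    by (rule integrable_spike[OF f neg]) auto
  moreover have "integral {0..L} ?f \<le> integral {0..L} g"
    using le by (intro integral_le[OF \<open>?f integrable_on {0..L}\<close> g]) auto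
  ultimately show ?thesis by simp
qed

lemma energy_deriv:
  fixes u ut :: "nat \<Rightarrow> real \<Rightarrow> real \<Rightarrow> real" and \<theta> :: "nat \<Rightarrow> real"
  assumes t: "t \<in> {0<..<T}" and L: "0 \<le> L"
    and cu: "\<forall>j<m. continuous_on ({0..L} \<times> {0<..<T}) (\<lambda>z. u j (fst z) (snd z))"
    and cut: "\<forall>j<m. continuous_on ({0..L} \<times> {0<..<T}) (\<lambda>z. ut j (fst z) (snd z))"
    and dt: "\<forall>j<m. \<forall>x\<in>{0..L}. \<forall>s\<in>{0<..<T}. ((\<lambda>s. u j x s) has_real_derivative ut j x s) (at s)"
  shows "((\<lambda>s. energy m (Suc (Suc n)) \<theta> L u s) has_real_derivative
     integral {0..L} (\<lambda>x. \<Sum>i<m. ut i x t * pol m (Suc n) (Dc i (a0 m (Suc (Suc n)) \<theta>)) (\<lambda>j. u j x t))) (at t)"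
proof -
  let ?a = "a0 m (Suc (Suc n)) \<theta>"
  define \<delta> where "\<delta> = min t (T - t) / 2"
  have \<delta>: "\<delta> > 0" using t unfolding \<delta>_def by auto
  let ?U = "{t - \<delta> .. t + \<delta>}"
  have "\<delta> \<le> t / 2" "\<delta> \<le> (T - t) / 2" unfolding \<delta>_def by auto
  then have U: "?U \<subseteq> {0<..<T}" using t \<delta> by auto
  let ?f = "\<lambda>s x. pol m (Suc (Suc n)) ?a (\<lambda>j. u j x s)"
  let ?fx = "\<lambda>s x. \<Sum>i<m. ut i x s * pol m (Suc n) (Dc i ?a) (\<lambda>j. u j x s)"
  have "((\<lambda>s. integral (cbox 0 L) (?f s)) has_field_derivative integral (cbox 0 L) (?fx t)) (at t within ?U)"
  proof (rule leibniz_rule_field_derivative)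
    fix s x assume s: "s \<in> ?U" and x: "x \<in> cbox 0 L"
    have "((\<lambda>s. pol m (Suc (Suc n)) ?a (\<lambda>j. u j x s)) has_real_derivative
        (\<Sum>i<m. ut i x s * pol m (Suc n) (Dc i ?a) (\<lambda>j. u j x s))) (at s within ?U)"
    proof (rule pol_deriv)
      fix j assume j: "j < m"
      have "s \<in> {0<..<T}" using s U by blast
      then have "((\<lambda>s. u j x s) has_real_derivative ut j x s) (at s)" using dt j x by auto
      then show "((\<lambda>s. u j x s) has_real_derivative ut j x s) (at s within ?U)"
        by (rule has_field_derivative_at_within)
    qed
    then show "((\<lambda>s. ?f s x) has_field_derivative ?fx s x) (at s within ?U)" by simp
  next
    fix s assume s: "s \<in> ?U"
    have "continuous_on {0..L} (?f s)"
      using cu s U by (intro pol_cont cont_slice[where Y="{0<..<T}"]) auto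
    then show "?f s integrable_on cbox 0 L" by (simp add: integrable_continuous_interval)
  next
    have cu': "\<forall>j<m. continuous_on (?U \<times> {0..L}) (\<lambda>z. u j (snd z) (fst z))"
      using cu U by (auto intro: cont_swap)
    have cut': "\<forall>j<m. continuous_on (?U \<times> {0..L}) (\<lambda>z. ut j (snd z) (fst z))"
      using cut U by (auto intro: cont_swap)
    have "continuous_on (?U \<times> {0..L}) (\<lambda>z. ?fx (fst z) (snd z))"
      using cu' cut' by (auto intro!: continuous_intros pol_cont)
    then show "continuous_on (?U \<times> cbox 0 L) (\<lambda>(s, x). ?fx s x)"
      by (simp add: split_beta)
  next
    show "t \<in> ?U" using \<delta> by auto
    show "convex ?U" by simp
  qed
  moreover have "at t within ?U = at t"
    by (rule at_within_interior) (use \<delta> in auto)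
  moreover have "(\<lambda>s. integral (cbox 0 L) (?f s)) = (\<lambda>s. energy m (Suc (Suc n)) \<theta> L u s)"
    by (simp add: energy_pol)
  ultimately show ?thesis by simp
qed

lemma rows_bound:
  fixes u ut uxx :: "nat \<Rightarrow> real \<Rightarrow> real \<Rightarrow> real"
    and f :: "nat \<Rightarrow> real \<Rightarrow> real \<Rightarrow> (nat \<Rightarrow> real) \<Rightarrow> real"
  assumes cu: "\<forall>j<m. continuous_on ({0..L} \<times> {0<..<T}) (\<lambda>z. u j (fst z) (snd z))"
    and cut: "\<forall>j<m. continuous_on ({0..L} \<times> {0<..<T}) (\<lambda>z. ut j (fst z) (snd z))"
    and cuxx: "\<forall>j<m. continuous_on ({0..L} \<times> {0<..<T}) (\<lambda>z. uxx j (fst z) (snd z))"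
    and eq: "\<forall>j<m. AE z in lborel. z \<in> {0<..<L} \<times> {0<..<T} \<longrightarrow>
           ut j (fst z) (snd z) - d j * uxx j (fst z) (snd z) = f j (fst z) (snd z) (\<lambda>k. u k (fst z) (snd z))"
    and A4: "\<forall>i<m. \<forall>v :: nat \<Rightarrow> real. (\<forall>j<m. v j \<ge> 0) \<longrightarrow>
               (\<forall>x\<in>{0<..<L}. \<forall>t\<ge>0.
                  (\<Sum>j\<le>i. A i j * f j x t v) \<le> C * (1 + (\<Sum>j<m. v j)) powr r)"
    and nonneg: "\<forall>j<m. \<forall>x\<in>{0..L}. \<forall>t\<in>{0<..<T}. u j x t \<ge> 0"
    and i: "i < m" and x: "x \<in> {0<..<L}" and t: "t \<in> {0<..<T}"
  shows "(\<Sum>j\<le>i. A i j * (ut j x t - d j * uxx j x t)) \<le> C * (1 + (\<Sum>j<m. u j x t)) powr r"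
proof -
  let ?S = "{0<..<L} \<times> {0<..<T}"
  let ?h = "\<lambda>z. (\<Sum>j\<le>i. A i j * (ut j (fst z) (snd z) - d j * uxx j (fst z) (snd z)))
      - C * (1 + (\<Sum>j<m. u j (fst z) (snd z))) powr r"
  have Sopen: "open ?S" by (intro open_Times) auto
  have sub: "?S \<subseteq> {0..L} \<times> {0<..<T}" by auto
  have cu': "\<forall>j<m. continuous_on ?S (\<lambda>z. u j (fst z) (snd z))"
    using cu continuous_on_subset[OF _ sub] by blast
  have cut': "\<forall>j<m. continuous_on ?S (\<lambda>z. ut j (fst z) (snd z))"
    using cut continuous_on_subset[OF _ sub] by blast
  have cuxx': "\<forall>j<m. continuous_on ?S (\<lambda>z. uxx j (fst z) (snd z))"
    using cuxx continuous_on_subset[OF _ sub] by blast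
  have pos: "\<forall>z\<in>?S. 1 + (\<Sum>j<m. u j (fst z) (snd z)) \<noteq> 0"
  proof
    fix z assume z: "z \<in> ?S"
    have "(\<Sum>j<m. u j (fst z) (snd z)) \<ge> 0"
      using nonneg z by (intro sum_nonneg) auto
    then show "1 + (\<Sum>j<m. u j (fst z) (snd z)) \<noteq> 0" by simp
  qed
  have hc: "continuous_on ?S ?h"
    using cu' cut' cuxx' i pos by (auto intro!: continuous_intros)
  have aeall: "AE z in lborel. \<forall>j\<in>{..<m}. z \<in> ?S \<longrightarrow>
           ut j (fst z) (snd z) - d j * uxx j (fst z) (snd z) = f j (fst z) (snd z) (\<lambda>k. u k (fst z) (snd z))"
    using eq by (intro AE_finite_allI) auto
  have ae: "AE z in lborel. z \<in> ?S \<longrightarrow> ?h z \<le> 0"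
    using aeall
  proof (rule AE_mp[OF _ AE_I2], intro impI)
    fix z assume H: "\<forall>j\<in>{..<m}. z \<in> ?S \<longrightarrow>
           ut j (fst z) (snd z) - d j * uxx j (fst z) (snd z) = f j (fst z) (snd z) (\<lambda>k. u k (fst z) (snd z))"
      and z: "z \<in> ?S"
    have "(\<Sum>j\<le>i. A i j * (ut j (fst z) (snd z) - d j * uxx j (fst z) (snd z)))
        = (\<Sum>j\<le>i. A i j * f j (fst z) (snd z) (\<lambda>k. u k (fst z) (snd z)))"
      using H z i by (intro sum.cong refl) auto
    also have "\<dots> \<le> C * (1 + (\<Sum>j<m. u j (fst z) (snd z))) powr r"
    proof -
      have v: "\<forall>j<m. (\<lambda>k. u k (fst z) (snd z)) j \<ge> 0" using nonneg z by auto
      have "fst z \<in> {0<..<L}" "snd z \<ge> 0" using z by auto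
      then show ?thesis using A4 i v by auto
    qed
    finally show "?h z \<le> 0" by simp
  qed
  have "?h (x, t) \<le> 0"
    by (rule AE_cont_le[OF Sopen hc ae]) (use x t in auto)
  then show ?thesis by simp
qed

lemma main_step:
  fixes L :: real and m n :: nat and d :: "nat \<Rightarrow> real"
    and f :: "nat \<Rightarrow> real \<Rightarrow> real \<Rightarrow> (nat \<Rightarrow> real) \<Rightarrow> real"
    and A :: "nat \<Rightarrow> nat \<Rightarrow> real" and r :: real and C :: real
    and \<theta> :: "nat \<Rightarrow> real" and K1 Cp :: real
    and u ut ux uxx :: "nat \<Rightarrow> real \<Rightarrow> real \<Rightarrow> real"
  assumes L_pos: "L > 0"
    and d_pos: "\<forall>i<m. d i > 0"
    and A_nonneg: "\<forall>i<m. \<forall>j<m. A i j \<ge> 0"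
    and A_diag: "\<forall>i<m. A i i > 0"
    and r_ge: "r \<ge> 1"
    and C_pos: "C > 0"
    and A4: "\<forall>i<m. \<forall>v :: nat \<Rightarrow> real. (\<forall>j<m. v j \<ge> 0) \<longrightarrow>
               (\<forall>x\<in>{0<..<L}. \<forall>t\<ge>0.
                  (\<Sum>j\<le>i. A i j * f j x t v) \<le> C * (1 + (\<Sum>j<m. v j)) powr r)"
    and th1: "\<forall>i<m. \<theta> i \<ge> 1"
    and thdt: "\<forall>i<m. d i * ((\<theta> i)\<^sup>2 - 1) \<ge> real m * (\<Sum>k<m. d k) + 1"
    and thH: "\<forall>\<gamma>\<in>multi_indices m (Suc n). \<forall>i<m. (\<Sum>k\<in>{i<..<m}. A k i * (\<theta> k ^ (2 * \<gamma> k + 1) / A k k))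
        \<le> \<theta> i ^ (2 * \<gamma> i + 1)"
    and K1_def: "K1 = (\<Sum>\<gamma>\<in>multi_indices m (Suc n). real (Suc (Suc n)) * multinom m (Suc n) \<gamma> * Th m \<theta> \<gamma>
          * (\<Sum>i<m. \<theta> i ^ (2 * \<gamma> i + 1) / A i i))"
    and Cp_def: "Cp = K1 * C * (real m + 1) powr (real (Suc (Suc n)) - 1 + r) * (L + 1) + 1"
    and T: "T > 0" and t: "t \<in> {0<..<T}"
    and nonneg: "\<forall>i<m. \<forall>x\<in>{0..L}. \<forall>t\<in>{0<..<T}. u i x t \<ge> 0"
    and sol: "\<forall>i<m.
        continuous_on ({0..L} \<times> {0<..<T}) (\<lambda>z. u i (fst z) (snd z)) \<and>
        continuous_on ({0..L} \<times> {0<..<T}) (\<lambda>z. ut i (fst z) (snd z)) \<and>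
        continuous_on ({0..L} \<times> {0<..<T}) (\<lambda>z. ux i (fst z) (snd z)) \<and>
        continuous_on ({0..L} \<times> {0<..<T}) (\<lambda>z. uxx i (fst z) (snd z)) \<and>
        (\<forall>x\<in>{0..L}. \<forall>t\<in>{0<..<T}.
           ((\<lambda>s. u i x s) has_real_derivative ut i x t) (at t) \<and>
           ((\<lambda>y. u i y t) has_real_derivative ux i x t) (at x within {0..L}) \<and>
           ((\<lambda>y. ux i y t) has_real_derivative uxx i x t) (at x within {0..L})) \<and>
        (\<forall>t\<in>{0<..<T}. ux i 0 t = 0 \<and> ux i L t = 0) \<and>
        (AE z in lborel. z \<in> {0<..<L} \<times> {0<..<T} \<longrightarrow>
           ut i (fst z) (snd z) - d i * uxx i (fst z) (snd z)
             = f i (fst z) (snd z) (\<lambda>j. u j (fst z) (snd z)))"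
  shows "\<exists>D. ((\<lambda>s. energy m (Suc (Suc n)) \<theta> L u s) has_real_derivative D) (at t) \<and>
            D + 1 * (\<Sum>i<m. integral {0..L} (\<lambda>x. (deriv (\<lambda>y. u i y t powr (real (Suc (Suc n)) / 2)) x)\<^sup>2))
              \<le> Cp * (1 + (\<Sum>i<m. integral {0..L} (\<lambda>x. u i x t powr (real (Suc (Suc n)) - 1 + r))))"
proof -
  define p where "p = Suc (Suc n)"
  define q where "q = real p - 1 + r"
  let ?a = "a0 m p \<theta>"
  define P where "P i x = pol m (Suc n) (Dc i ?a) (\<lambda>j. u j x t)" for i x
  define Q where "Q i j x = pol m n (Dc j (Dc i ?a)) (\<lambda>j. u j x t)" for i j x
  define g where "g i x = ut i x t - d i * uxx i x t" for i x
  define D where "D = integral {0..L} (\<lambda>x. \<Sum>i<m. ut i x t * P i x)"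
  have tT: "t \<in> {0<..<T}" by (rule t)
  have q_pos: "q > 0" and q_eq: "q = r + real (Suc n)" unfolding q_def p_def using r_ge by auto
  have cu: "\<And>j. j < m \<Longrightarrow> continuous_on {0..L} (\<lambda>x. u j x t)"
    using sol t by (intro cont_slice[where Y = "{0<..<T}"]) auto
  have cut: "\<And>j. j < m \<Longrightarrow> continuous_on {0..L} (\<lambda>x. ut j x t)"
    using sol t by (intro cont_slice[where Y = "{0<..<T}"]) auto
  have cux: "\<And>j. j < m \<Longrightarrow> continuous_on {0..L} (\<lambda>x. ux j x t)"
    using sol t by (intro cont_slice[where Y = "{0<..<T}"]) auto
  have cuxx: "\<And>j. j < m \<Longrightarrow> continuous_on {0..L} (\<lambda>x. uxx j x t)"
    using sol t by (intro cont_slice[where Y = "{0<..<T}"]) auto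
  have cP: "\<And>i. continuous_on {0..L} (P i)"
    unfolding P_def using cu by (intro pol_cont) auto
  have cQ: "\<And>i j. continuous_on {0..L} (Q i j)"
    unfolding Q_def using cu by (intro pol_cont) auto
  have cg: "\<And>i. i < m \<Longrightarrow> continuous_on {0..L} (g i)"
    unfolding g_def using cut cuxx by (auto intro!: continuous_intros)
  have Dd: "((\<lambda>s. energy m (Suc (Suc n)) \<theta> L u s) has_real_derivative D) (at t)"
    unfolding D_def P_def p_def
    by (rule energy_deriv[OF t]) (use L_pos sol in auto)
  have dP: "((\<lambda>y. P i y) has_real_derivative (\<Sum>j<m. ux j x t * Q i j x)) (at x within {0..L})"
    if x: "x \<in> {0..L}" for i x
    unfolding P_def Q_def
    by (rule pol_deriv[where w = "\<lambda>j y. u j y t"]) (use sol t x in auto)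
  have ibp: "integral {0..L} (\<lambda>x. P i x * uxx i x t) = - integral {0..L} (\<lambda>x. (\<Sum>j<m. ux j x t * Q i j x) * ux i x t)"
    if i: "i < m" for i
  proof (rule ibp_neumann)
    show "0 \<le> L" using L_pos by simp
    show "\<And>x. x \<in> {0..L} \<Longrightarrow> (P i has_real_derivative (\<Sum>j<m. ux j x t * Q i j x)) (at x within {0..L})"
      using dP by simp
    show "\<And>x. x \<in> {0..L} \<Longrightarrow> ((\<lambda>y. ux i y t) has_real_derivative uxx i x t) (at x within {0..L})"
      using sol i t by auto
    show "continuous_on {0..L} (\<lambda>x. \<Sum>j<m. ux j x t * Q i j x)"
      using cux cQ by (auto intro!: continuous_intros)
    show "continuous_on {0..L} (\<lambda>x. uxx i x t)" using cuxx i by auto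
    show "ux i 0 t = 0" "ux i L t = 0" using sol i t by auto
  qed
  have dsq: "integral {0..L} (\<lambda>x. (deriv (\<lambda>y. u i y t powr (real p / 2)) x)\<^sup>2)
      = integral {0..L} (\<lambda>x. (real p / 2)\<^sup>2 * (u i x t ^ n * (ux i x t)\<^sup>2))" if i: "i < m" for i
  proof (rule integral_spike[of "{0, L}"])
    show "negligible {0, L}" by auto
    fix x assume x: "x \<in> {0..L} - {0, L}"
    then have x': "0 < x" "x < L" by auto
    have "at x within {0..L} = at x"
      by (rule at_within_interior) (use x' in auto)
    moreover have "((\<lambda>y. u i y t) has_real_derivative ux i x t) (at x within {0..L})"
      using sol i t x by auto
    ultimately have dx: "((\<lambda>y. u i y t) has_real_derivative ux i x t) (at x)"
      by simp
    have nn: "\<forall>y\<in>{0..L}. u i y t \<ge> 0" using nonneg i t by auto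
    have "p - 2 = n" unfolding p_def by simp
    then show "(real p / 2)\<^sup>2 * (u i x t ^ n * (ux i x t)\<^sup>2) = (deriv (\<lambda>y. u i y t powr (real p / 2)) x)\<^sup>2"
      using deriv_powr_sq[of p x L "\<lambda>y. u i y t", OF _ x' nn dx] unfolding p_def by simp
  qed
  define F where "F x = (\<Sum>i<m. g i x * P i x) - (\<Sum>i<m. d i * ((\<Sum>j<m. ux j x t * Q i j x) * ux i x t))
      + (\<Sum>i<m. (real p / 2)\<^sup>2 * (u i x t ^ n * (ux i x t)\<^sup>2))" for x
  define R where "R x = K1 * C * (real m + 1) powr q * (1 + (\<Sum>i<m. u i x t powr q))" for x
  have th0: "\<forall>j<m. \<theta> j > 0" using th1 by (auto intro: less_le_trans[OF zero_less_one])
  have K1_0: "K1 \<ge> 0" unfolding K1_def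
    using th0 A_diag multinom_pos Th_pos
    by (intro sum_nonneg mult_nonneg_nonneg divide_nonneg_nonneg)
       (auto intro: less_imp_le simp del: power_Suc)
  have pw: "F x \<le> R x" if x: "x \<in> {0<..<L}" for x
  proof -
    define v where "v = (\<lambda>j. u j x t)"
    have v0: "\<forall>j<m. v j \<ge> 0" unfolding v_def using nonneg x t by auto
    have S0: "(\<Sum>j<m. v j) \<ge> 0" using v0 by (intro sum_nonneg) auto
    define Bx where "Bx = C * (1 + (\<Sum>j<m. v j)) powr r"
    have B0: "Bx \<ge> 0" unfolding Bx_def using C_pos by simp
    have rows: "\<forall>i<m. (\<Sum>j\<le>i. A i j * g j x) \<le> Bx"
    proof (intro allI impI)
      fix i assume i: "i < m"
      show "(\<Sum>j\<le>i. A i j * g j x) \<le> Bx"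
        unfolding g_def Bx_def v_def
        by (rule rows_bound[where T = T and f = f]) (use sol A4 nonneg i x t in auto)
    qed
    have R1: "(\<Sum>i<m. g i x * P i x) \<le> K1 * Bx * (1 + (\<Sum>j<m. v j)) ^ (Suc n)"
      using reaction_bound[OF A_diag A_nonneg thH rows B0 v0 th0]
      unfolding K1_def P_def v_def p_def by simp
    have pos1: "1 + (\<Sum>j<m. v j) > 0" using S0 by simp
    have "K1 * Bx * (1 + (\<Sum>j<m. v j)) ^ (Suc n) = K1 * C * (1 + (\<Sum>j<m. v j)) powr q"
    proof -
      have "(1 + (\<Sum>j<m. v j)) ^ (Suc n) = (1 + (\<Sum>j<m. v j)) powr (real (Suc n))"
        using powr_realpow[OF pos1, of "Suc n"] by (simp only:)
      then have "(1 + (\<Sum>j<m. v j)) powr r * (1 + (\<Sum>j<m. v j)) ^ (Suc n) = (1 + (\<Sum>j<m. v j)) powr q"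
        unfolding q_eq by (simp add: powr_add)
      then show ?thesis unfolding Bx_def by (simp add: mult_ac)
    qed
    also have "\<dots> \<le> K1 * C * ((real m + 1) powr q * (1 + (\<Sum>j<m. v j powr q)))"
      using powr_sum_bound[OF v0 q_pos] K1_0 C_pos by (intro mult_left_mono) auto
    finally have R2: "(\<Sum>i<m. g i x * P i x) \<le> R x"
      using R1 unfolding R_def v_def by (simp add: mult_ac)
    have d0: "\<forall>i<m. 0 \<le> d i" using d_pos by (auto intro: less_imp_le)
    have dM: "\<forall>i<m. d i \<le> (\<Sum>k<m. d k)" using d0 by (auto intro: member_le_sum)
    have Dg: "(\<Sum>i<m. d i * ((\<Sum>j<m. ux j x t * Q i j x) * ux i x t))
        \<ge> real (Suc (Suc n)) * real (Suc n) * (\<Sum>i<m. v i ^ n * (ux i x t)\<^sup>2)"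
      using diffusion_bound[OF d0 dM th1 thdt v0, where \<xi> = "\<lambda>j. ux j x t" and n = n]
      unfolding Q_def v_def p_def by simp
    have cst: "(real p / 2)\<^sup>2 \<le> real (Suc (Suc n)) * real (Suc n)"
      unfolding p_def by (simp add: power2_eq_square field_simps)
    have I4: "(\<Sum>i<m. (real p / 2)\<^sup>2 * (u i x t ^ n * (ux i x t)\<^sup>2))
        \<le> real (Suc (Suc n)) * real (Suc n) * (\<Sum>i<m. v i ^ n * (ux i x t)\<^sup>2)"
    proof -
      have "(\<Sum>i<m. (real p / 2)\<^sup>2 * (u i x t ^ n * (ux i x t)\<^sup>2))
          \<le> (\<Sum>i<m. real (Suc (Suc n)) * real (Suc n) * (v i ^ n * (ux i x t)\<^sup>2))"
        using cst v0 unfolding v_def by (intro sum_mono mult_right_mono) auto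
      then show ?thesis by (simp add: sum_distrib_left)
    qed
    show ?thesis unfolding F_def using R2 Dg I4 by linarith
  qed
  have cuq: "\<And>i. i < m \<Longrightarrow> continuous_on {0..L} (\<lambda>x. u i x t powr q)"
    using cu nonneg t q_pos by (intro continuous_on_powr') (auto intro!: continuous_intros)
  have int: "\<And>h :: real \<Rightarrow> real. continuous_on {0..L} h \<Longrightarrow> h integrable_on {0..L}"
    by (rule integrable_continuous_interval)
  have iF: "F integrable_on {0..L}" unfolding F_def
    using cg cP cQ cux cu by (intro int) (auto intro!: continuous_intros)
  have iR: "R integrable_on {0..L}" unfolding R_def
    by (intro int continuous_on_mult continuous_on_add continuous_on_const continuous_on_sum cuq) auto
  have igP: "(\<lambda>x. \<Sum>i<m. g i x * P i x) integrable_on {0..L}"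
    using cg cP by (intro int) (auto intro!: continuous_intros)
  have iPuxx: "\<And>i. i < m \<Longrightarrow> (\<lambda>x. P i x * uxx i x t) integrable_on {0..L}"
    using cP cuxx by (intro int) (auto intro!: continuous_intros)
  have iI3: "\<And>i. i < m \<Longrightarrow> (\<lambda>x. (\<Sum>j<m. ux j x t * Q i j x) * ux i x t) integrable_on {0..L}"
    using cQ cux by (intro int) (auto intro!: continuous_intros)
  have iI4: "\<And>i. i < m \<Longrightarrow> (\<lambda>x. (real p / 2)\<^sup>2 * (u i x t ^ n * (ux i x t)\<^sup>2)) integrable_on {0..L}"
    using cu cux by (intro int) (auto intro!: continuous_intros)
  have eqD: "D = integral {0..L} (\<lambda>x. \<Sum>i<m. g i x * P i x) + (\<Sum>i<m. d i * integral {0..L} (\<lambda>x. P i x * uxx i x t))"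
  proof -
    have "D = integral {0..L} (\<lambda>x. (\<Sum>i<m. g i x * P i x) + (\<Sum>i<m. d i * (P i x * uxx i x t)))"
      unfolding D_def
    proof (rule integral_cong)
      fix x
      have "(\<Sum>i<m. ut i x t * P i x) = (\<Sum>i<m. g i x * P i x + d i * (P i x * uxx i x t))"
        by (intro sum.cong refl) (simp add: g_def algebra_simps)
      then show "(\<Sum>i<m. ut i x t * P i x) = (\<Sum>i<m. g i x * P i x) + (\<Sum>i<m. d i * (P i x * uxx i x t))"
        by (simp add: sum.distrib)
    qed
    also have "\<dots> = integral {0..L} (\<lambda>x. \<Sum>i<m. g i x * P i x) + integral {0..L} (\<lambda>x. \<Sum>i<m. d i * (P i x * uxx i x t))"
      using cP cuxx cg by (intro integral_add int) (auto intro!: continuous_intros)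
    also have "integral {0..L} (\<lambda>x. \<Sum>i<m. d i * (P i x * uxx i x t)) = (\<Sum>i<m. integral {0..L} (\<lambda>x. d i * (P i x * uxx i x t)))"
      using iPuxx by (intro integral_sum) (auto intro: integrable_on_mult_right)
    also have "\<dots> = (\<Sum>i<m. d i * integral {0..L} (\<lambda>x. P i x * uxx i x t))" by simp
    finally show ?thesis .
  qed
  have eqF: "integral {0..L} F = integral {0..L} (\<lambda>x. \<Sum>i<m. g i x * P i x)
      - (\<Sum>i<m. d i * integral {0..L} (\<lambda>x. (\<Sum>j<m. ux j x t * Q i j x) * ux i x t))
      + (\<Sum>i<m. integral {0..L} (\<lambda>x. (real p / 2)\<^sup>2 * (u i x t ^ n * (ux i x t)\<^sup>2)))"
  proof -
    have a: "integral {0..L} (\<lambda>x. \<Sum>i<m. d i * ((\<Sum>j<m. ux j x t * Q i j x) * ux i x t))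
        = (\<Sum>i<m. d i * integral {0..L} (\<lambda>x. (\<Sum>j<m. ux j x t * Q i j x) * ux i x t))"
    proof -
      have "integral {0..L} (\<lambda>x. \<Sum>i<m. d i * ((\<Sum>j<m. ux j x t * Q i j x) * ux i x t))
          = (\<Sum>i<m. integral {0..L} (\<lambda>x. d i * ((\<Sum>j<m. ux j x t * Q i j x) * ux i x t)))"
        using iI3 by (intro integral_sum) (auto intro: integrable_on_mult_right)
      then show ?thesis by simp
    qed
    have b: "integral {0..L} (\<lambda>x. \<Sum>i<m. (real p / 2)\<^sup>2 * (u i x t ^ n * (ux i x t)\<^sup>2))
        = (\<Sum>i<m. integral {0..L} (\<lambda>x. (real p / 2)\<^sup>2 * (u i x t ^ n * (ux i x t)\<^sup>2)))"
      using iI4 by (intro integral_sum) auto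
    have i2: "(\<lambda>x. \<Sum>i<m. d i * ((\<Sum>j<m. ux j x t * Q i j x) * ux i x t)) integrable_on {0..L}"
      using cQ cux by (intro int) (auto intro!: continuous_intros)
    have i3: "(\<lambda>x. \<Sum>i<m. (real p / 2)\<^sup>2 * (u i x t ^ n * (ux i x t)\<^sup>2)) integrable_on {0..L}"
      using cu cux by (intro int) (auto intro!: continuous_intros)
    have i12: "(\<lambda>x. (\<Sum>i<m. g i x * P i x) - (\<Sum>i<m. d i * ((\<Sum>j<m. ux j x t * Q i j x) * ux i x t))) integrable_on {0..L}"
      using igP i2 by (rule integrable_diff)
    have "integral {0..L} F = integral {0..L} (\<lambda>x. (\<Sum>i<m. g i x * P i x) - (\<Sum>i<m. d i * ((\<Sum>j<m. ux j x t * Q i j x) * ux i x t)))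
        + integral {0..L} (\<lambda>x. \<Sum>i<m. (real p / 2)\<^sup>2 * (u i x t ^ n * (ux i x t)\<^sup>2))"
      unfolding F_def by (rule integral_add[OF i12 i3])
    also have "integral {0..L} (\<lambda>x. (\<Sum>i<m. g i x * P i x) - (\<Sum>i<m. d i * ((\<Sum>j<m. ux j x t * Q i j x) * ux i x t)))
        = integral {0..L} (\<lambda>x. \<Sum>i<m. g i x * P i x) - integral {0..L} (\<lambda>x. \<Sum>i<m. d i * ((\<Sum>j<m. ux j x t * Q i j x) * ux i x t))"
      by (rule integral_diff[OF igP i2])
    finally show ?thesis unfolding a b .
  qed
  have main_eq: "D + 1 * (\<Sum>i<m. integral {0..L} (\<lambda>x. (deriv (\<lambda>y. u i y t powr (real p / 2)) x)\<^sup>2))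
      = integral {0..L} F"
  proof -
    have "(\<Sum>i<m. d i * integral {0..L} (\<lambda>x. P i x * uxx i x t))
        = - (\<Sum>i<m. d i * integral {0..L} (\<lambda>x. (\<Sum>j<m. ux j x t * Q i j x) * ux i x t))"
      using ibp by (simp add: sum_negf[symmetric])
    moreover have "(\<Sum>i<m. integral {0..L} (\<lambda>x. (deriv (\<lambda>y. u i y t powr (real p / 2)) x)\<^sup>2))
        = (\<Sum>i<m. integral {0..L} (\<lambda>x. (real p / 2)\<^sup>2 * (u i x t ^ n * (ux i x t)\<^sup>2)))"
      using dsq by (intro sum.cong) auto
    ultimately show ?thesis unfolding eqD eqF by simp
  qed
  have intR: "integral {0..L} R = K1 * C * (real m + 1) powr q * (L + (\<Sum>i<m. integral {0..L} (\<lambda>x. u i x t powr q)))"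
  proof -
    have "integral {0..L} (\<lambda>x. 1 + (\<Sum>i<m. u i x t powr q)) = integral {0..L} (\<lambda>x. 1::real) + integral {0..L} (\<lambda>x. \<Sum>i<m. u i x t powr q)"
      by (intro integral_add int continuous_on_const continuous_on_sum cuq) auto
    also have "integral {0..L} (\<lambda>x. 1::real) = L" using L_pos by simp
    also have "integral {0..L} (\<lambda>x. \<Sum>i<m. u i x t powr q) = (\<Sum>i<m. integral {0..L} (\<lambda>x. u i x t powr q))"
      using cuq by (intro integral_sum int) auto
    finally show ?thesis unfolding R_def by simp
  qed
  have X0: "(\<Sum>i<m. integral {0..L} (\<lambda>x. u i x t powr q)) \<ge> 0"
    using cuq by (intro sum_nonneg integral_nonneg int) auto
  have fin: "K1 * C * (real m + 1) powr q * (L + (\<Sum>i<m. integral {0..L} (\<lambda>x. u i x t powr q)))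
      \<le> Cp * (1 + (\<Sum>i<m. integral {0..L} (\<lambda>x. u i x t powr q)))"
  proof -
    define X where "X = (\<Sum>i<m. integral {0..L} (\<lambda>x. u i x t powr q))"
    define K where "K = K1 * C * (real m + 1) powr q"
    have K0: "K \<ge> 0" unfolding K_def using K1_0 C_pos by simp
    have Cp': "Cp = K * (L + 1) + 1" unfolding Cp_def K_def q_def p_def by simp
    have X0': "X \<ge> 0" using X0 unfolding X_def .
    have "K * (L + X) \<le> K * (L + 1) + K * (L + 1) * X + 1 + X"
    proof -
      have "K * 1 \<le> K * (L + 1)" using K0 L_pos by (intro mult_left_mono) auto
      then have "K * X \<le> K * (L + 1) * X" using X0' by (intro mult_right_mono) auto
      moreover have "K * L \<le> K * (L + 1)" using K0 by (simp add: mult_left_mono)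
      ultimately show ?thesis using X0' by (simp add: algebra_simps)
    qed
    then show ?thesis unfolding X_def[symmetric] K_def[symmetric] Cp' by (simp add: algebra_simps)
  qed
  have "D + 1 * (\<Sum>i<m. integral {0..L} (\<lambda>x. (deriv (\<lambda>y. u i y t powr (real p / 2)) x)\<^sup>2))
      \<le> Cp * (1 + (\<Sum>i<m. integral {0..L} (\<lambda>x. u i x t powr q)))"
    unfolding main_eq
    using integral_le_interior[OF iF iR pw] intR fin by simp
  then show ?thesis using Dd unfolding p_def q_def by blast
qed

lemma nat_ge2_all: "(\<And>n. P (Suc (Suc n))) \<Longrightarrow> \<forall>p::nat. 2 \<le> p \<longrightarrow> P p"
proof (intro allI impI)
  fix p :: nat assume H: "\<And>n. P (Suc (Suc n))" and p: "2 \<le> p"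
  have "p = Suc (Suc (p - 2))" using p by simp
  then show "P p" using H[of "p - 2"] by simp
qed

lemma main_n:
  fixes L :: real and m :: nat and d :: "nat \<Rightarrow> real"
    and f :: "nat \<Rightarrow> real \<Rightarrow> real \<Rightarrow> (nat \<Rightarrow> real) \<Rightarrow> real"
    and A :: "nat \<Rightarrow> nat \<Rightarrow> real" and r :: real and C :: real
  assumes L_pos: "L > 0"
    and d_pos: "\<forall>i<m. d i > 0"
    and A_nonneg: "\<forall>i<m. \<forall>j<m. A i j \<ge> 0"
    and A_diag: "\<forall>i<m. A i i > 0"
    and r_ge: "r \<ge> 1"
    and C_pos: "C > 0"
    and A4: "\<forall>i<m. \<forall>v :: nat \<Rightarrow> real. (\<forall>j<m. v j \<ge> 0) \<longrightarrow>
               (\<forall>x\<in>{0<..<L}. \<forall>t\<ge>0.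
                  (\<Sum>j\<le>i. A i j * f j x t v) \<le> C * (1 + (\<Sum>j<m. v j)) powr r)"
  shows "\<exists>\<theta> :: nat \<Rightarrow> real. (\<forall>i<m. \<theta> i > 0) \<and>
      (\<exists>\<alpha>>0. \<exists>C'>0. \<forall>T u0 u. T > 0 \<longrightarrow> classical_solution L m d f T u0 u \<longrightarrow>
         (\<forall>i<m. \<forall>x\<in>{0..L}. \<forall>t\<in>{0<..<T}. u i x t \<ge> 0) \<longrightarrow>
         (\<forall>t\<in>{0<..<T}. \<exists>D. ((\<lambda>s. energy m (Suc (Suc n)) \<theta> L u s) has_real_derivative D) (at t) \<and>
            D + \<alpha> * (\<Sum>i<m. integral {0..L} (\<lambda>x. (deriv (\<lambda>y. u i y t powr (real (Suc (Suc n)) / 2)) x)\<^sup>2))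
              \<le> C' * (1 + (\<Sum>i<m. integral {0..L} (\<lambda>x. u i x t powr (real (Suc (Suc n)) - 1 + r))))))"
proof -
  define \<theta> where "\<theta> = thc m n A d"
  note thp = thc_props[OF A_diag A_nonneg d_pos, of n]
  have B2: "Bc m A d \<ge> 2" using Bc_ge(1)[OF A_diag A_nonneg d_pos] .
  have th1: "\<forall>i<m. \<theta> i \<ge> 1" using thp(1) B2 unfolding \<theta>_def by force
  have th0: "\<forall>i<m. \<theta> i > 0" using th1 by (auto intro: less_le_trans[OF zero_less_one])
  have thdt: "\<forall>i<m. d i * ((\<theta> i)\<^sup>2 - 1) \<ge> real m * (\<Sum>k<m. d k) + 1"
    using thp(2) unfolding \<theta>_def .
  have thH: "\<forall>\<gamma>\<in>multi_indices m (Suc n). \<forall>i<m. (\<Sum>k\<in>{i<..<m}. A k i * (\<theta> k ^ (2 * \<gamma> k + 1) / A k k))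
        \<le> \<theta> i ^ (2 * \<gamma> i + 1)"
    using thp(3) unfolding \<theta>_def .
  define K1 where "K1 = (\<Sum>\<gamma>\<in>multi_indices m (Suc n). real (Suc (Suc n)) * multinom m (Suc n) \<gamma> * Th m \<theta> \<gamma>
          * (\<Sum>i<m. \<theta> i ^ (2 * \<gamma> i + 1) / A i i))"
  define Cp where "Cp = K1 * C * (real m + 1) powr (real (Suc (Suc n)) - 1 + r) * (L + 1) + 1"
  have K1_0: "K1 \<ge> 0" unfolding K1_def
    using th0 A_diag multinom_pos Th_pos
    by (intro sum_nonneg mult_nonneg_nonneg divide_nonneg_nonneg)
       (auto intro: less_imp_le simp del: power_Suc)
  have Cp0: "Cp > 0"
  proof -
    have "K1 * C * (real m + 1) powr (real (Suc (Suc n)) - 1 + r) * (L + 1) \<ge> 0"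
      using K1_0 C_pos L_pos by (intro mult_nonneg_nonneg) auto
    then show ?thesis unfolding Cp_def by simp
  qed
  have main: "\<forall>T u0 u. T > 0 \<longrightarrow> classical_solution L m d f T u0 u \<longrightarrow>
         (\<forall>i<m. \<forall>x\<in>{0..L}. \<forall>t\<in>{0<..<T}. u i x t \<ge> 0) \<longrightarrow>
         (\<forall>t\<in>{0<..<T}. \<exists>D. ((\<lambda>s. energy m (Suc (Suc n)) \<theta> L u s) has_real_derivative D) (at t) \<and>
            D + 1 * (\<Sum>i<m. integral {0..L} (\<lambda>x. (deriv (\<lambda>y. u i y t powr (real (Suc (Suc n)) / 2)) x)\<^sup>2))
              \<le> Cp * (1 + (\<Sum>i<m. integral {0..L} (\<lambda>x. u i x t powr (real (Suc (Suc n)) - 1 + r)))))"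
  proof (intro allI impI ballI)
    fix T u0 u t
    assume T: "T > 0" and cs: "classical_solution L m d f T u0 u"
      and nn: "\<forall>i<m. \<forall>x\<in>{0..L}. \<forall>t\<in>{0<..<T}. u i x t \<ge> 0" and t: "t \<in> {0<..<T}"
    from cs obtain ut ux uxx where sol: "\<forall>i<m.
        continuous_on ({0..L} \<times> {0<..<T}) (\<lambda>z. u i (fst z) (snd z)) \<and>
        continuous_on ({0..L} \<times> {0<..<T}) (\<lambda>z. ut i (fst z) (snd z)) \<and>
        continuous_on ({0..L} \<times> {0<..<T}) (\<lambda>z. ux i (fst z) (snd z)) \<and>
        continuous_on ({0..L} \<times> {0<..<T}) (\<lambda>z. uxx i (fst z) (snd z)) \<and>
        (\<forall>x\<in>{0..L}. \<forall>t\<in>{0<..<T}.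
           ((\<lambda>s. u i x s) has_real_derivative ut i x t) (at t) \<and>
           ((\<lambda>y. u i y t) has_real_derivative ux i x t) (at x within {0..L}) \<and>
           ((\<lambda>y. ux i y t) has_real_derivative uxx i x t) (at x within {0..L})) \<and>
        (\<forall>t\<in>{0<..<T}. ux i 0 t = 0 \<and> ux i L t = 0) \<and>
        (AE z in lborel. z \<in> {0<..<L} \<times> {0<..<T} \<longrightarrow>
           ut i (fst z) (snd z) - d i * uxx i (fst z) (snd z)
             = f i (fst z) (snd z) (\<lambda>j. u j (fst z) (snd z)))"
      unfolding classical_solution_def by blast
    show "\<exists>D. ((\<lambda>s. energy m (Suc (Suc n)) \<theta> L u s) has_real_derivative D) (at t) \<and>
            D + 1 * (\<Sum>i<m. integral {0..L} (\<lambda>x. (deriv (\<lambda>y. u i y t powr (real (Suc (Suc n)) / 2)) x)\<^sup>2))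
              \<le> Cp * (1 + (\<Sum>i<m. integral {0..L} (\<lambda>x. u i x t powr (real (Suc (Suc n)) - 1 + r))))"
      by (rule main_step[OF L_pos d_pos A_nonneg A_diag r_ge C_pos A4 th1 thdt thH K1_def Cp_def T t nn sol])
  qed
  show ?thesis
  proof (rule exI[of _ \<theta>], intro conjI)
    show "\<forall>i<m. \<theta> i > 0" by (rule th0)
    show "\<exists>\<alpha>>0. \<exists>C'>0. \<forall>T u0 u. T > 0 \<longrightarrow> classical_solution L m d f T u0 u \<longrightarrow>
         (\<forall>i<m. \<forall>x\<in>{0..L}. \<forall>t\<in>{0<..<T}. u i x t \<ge> 0) \<longrightarrow>
         (\<forall>t\<in>{0<..<T}. \<exists>D. ((\<lambda>s. energy m (Suc (Suc n)) \<theta> L u s) has_real_derivative D) (at t) \<and>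
            D + \<alpha> * (\<Sum>i<m. integral {0..L} (\<lambda>x. (deriv (\<lambda>y. u i y t powr (real (Suc (Suc n)) / 2)) x)\<^sup>2))
              \<le> C' * (1 + (\<Sum>i<m. integral {0..L} (\<lambda>x. u i x t powr (real (Suc (Suc n)) - 1 + r)))))"
      apply (rule exI[of _ "1::real"])
      apply (rule conjI)
       apply simp
      apply (rule exI[of _ Cp])
      apply (rule conjI)
       apply (rule Cp0)
      apply (rule main)
      done
  qed
qed

theorem lemma4p4:
  fixes L :: real and m :: nat and d :: "nat \<Rightarrow> real"
    and f :: "nat \<Rightarrow> real \<Rightarrow> real \<Rightarrow> (nat \<Rightarrow> real) \<Rightarrow> real"
    and A :: "nat \<Rightarrow> nat \<Rightarrow> real" and r :: real and C :: real
  assumes L_pos: "L > 0"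
    and m_pos: "m \<ge> 1"
    and d_pos: "\<forall>i<m. d i > 0"
    and A_nonneg: "\<forall>i<m. \<forall>j<m. A i j \<ge> 0"
    and A_diag: "\<forall>i<m. A i i > 0"
    and A_lower: "\<forall>i<m. \<forall>j<m. i < j \<longrightarrow> A i j = 0"
    and r_ge: "r \<ge> 1"
    and C_pos: "C > 0"
    and A4: "\<forall>i<m. \<forall>v :: nat \<Rightarrow> real. (\<forall>j<m. v j \<ge> 0) \<longrightarrow>
               (\<forall>x\<in>{0<..<L}. \<forall>t\<ge>0.
                  (\<Sum>j\<le>i. A i j * f j x t v) \<le> C * (1 + (\<Sum>j<m. v j)) powr r)"
  shows "\<forall>p::nat. p \<ge> 2 \<longrightarrow>
    (\<exists>\<theta> :: nat \<Rightarrow> real. (\<forall>i<m. \<theta> i > 0) \<and>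
      (\<exists>\<alpha>>0. \<exists>C'>0. \<forall>T u0 u. T > 0 \<longrightarrow> classical_solution L m d f T u0 u \<longrightarrow>
         (\<forall>i<m. \<forall>x\<in>{0..L}. \<forall>t\<in>{0<..<T}. u i x t \<ge> 0) \<longrightarrow>
         (\<forall>t\<in>{0<..<T}. \<exists>D. ((\<lambda>s. energy m p \<theta> L u s) has_real_derivative D) (at t) \<and>
            D + \<alpha> * (\<Sum>i<m. integral {0..L} (\<lambda>x. (deriv (\<lambda>y. u i y t powr (real p / 2)) x)\<^sup>2))
              \<le> C' * (1 + (\<Sum>i<m. integral {0..L} (\<lambda>x. u i x t powr (real p - 1 + r)))))))"
  by (rule nat_ge2_all) (rule main_n[OF L_pos d_pos A_nonneg A_diag r_ge C_pos A4])

end
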